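(* Let $\mathsf{K}$ be one of $\mathsf{PSL}$, $\mathsf{ISL}$, $\mathsf{bISL}$, $\mathsf{PDL}$, $\mathsf{IL}$, $\mathsf{HA}$, and let $\mathsf{K}^\partial$ be the associated class of partial maps between posets (defined in the context). For every $\boldsymbol{A},\boldsymbol{B}\in\mathsf{K}$ and all posets $\mathbb{X},\mathbb{Y}$: (i) if $f\colon \boldsymbol{A}\to\boldsymbol{B}$ is a homomorphism, then $f_\ast\colon \boldsymbol{B}_\ast \rightharpoonup \boldsymbol{A}_\ast$ belongs to $\mathsf{K}^\partial$; (ii) if $p\colon\mathbb{X}\rightharpoonup\mathbb{Y}$ belongs to $\mathsf{K}^\partial$, then $\mathsf{Up}_{\mathsf{K}}(p)\colon \mathsf{Up}_{\mathsf{K}}(\mathbb{Y})\to\mathsf{Up}_{\mathsf{K}}(\mathbb{X})$ is a homomorphism. Furthermore, if $f$ is injective then $f_\ast$ is surjective, and if $p$ is surjective then $\mathsf{Up}_{\mathsf{K}}(p)$ is injective.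
   Context: Varieties: $\mathsf{PSL}$ = algebras $\langle A;\land,\lnot,0,1\rangle$ with $\langle A;\land\rangle$ a semilattice (order $a\le b$ iff $a\land b=a$) with minimum $0$, maximum $1$, and $c\land a=0\iff c\le\lnot a$; $\mathsf{ISL}$ = algebras $\langle A;\land,\to,1\rangle$, semilattice with maximum $1$ and $c\land a\le b\iff c\le a\to b$; $\mathsf{bISL}$ = $\langle A;\land,\to,0,1\rangle$ with $\langle A;\land,\to,1\rangle\in\mathsf{ISL}$ and $0$ the minimum; $\mathsf{PDL}$ = $\langle A;\land,\lor,\lnot,0,1\rangle$, distributive lattices whose $\langle\land,\lnot,0,1\rangle$-reduct is in $\mathsf{PSL}$; $\mathsf{IL}$ = $\langle A;\land,\lor,\to,1\rangle$, lattices whose $\langle\land,\to,1\rangle$-reduct is in $\mathsf{ISL}$; $\mathsf{HA}$ = Heyting algebras $\langle A;\land,\lor,\to,0,1\rangle$. For an algebra $\boldsymbol{A}$ in one of these, a filter is a nonempty upset of $\langle A;\le\rangle$ closed under $\land$; it is meet irreducible if it is proper and not the intersection of two filters both different from it; $\boldsymbol{A}_\ast$ is the poset of meet irreducible filters ordered by inclusion. A partial function $p\colon X\rightharpoonup Y$ is a function from a subset $\mathsf{dom}(p)\subseteq X$ to $Y$; it is surjective if its range is $Y$; between posets it is order preserving if $x\le z$ in $\mathsf{dom}(p)$ implies $p(x)\le p(z)$. For posets, ${\uparrow}S,{\downarrow}S$ denote the up/down-closures. An order preserving $p\colon\mathbb{X}\rightharpoonup\mathbb{Y}$ is: a partial negative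 p-morphism if $X={\downarrow}\{x\in X: {\uparrow}x\subseteq\mathsf{dom}(p)\}$ and for all $x\in\mathsf{dom}(p)$, $y\in Y$ with $p(x)\le y$ there is $z\in\mathsf{dom}(p)$ with $x\le z$ and $y\le p(z)$; a partial positive p-morphism if for all $x\in\mathsf{dom}(p)$, $y\in Y$ with $p(x)\le y$ there is $z\in\mathsf{dom}(p)$ with $x\le z$ and $y=p(z)$; a partial p-morphism if both. Dropping "partial" means $p$ is total. $p$ is almost total if $\mathsf{dom}(p)$ is a downset. The classes $\mathsf{K}^\partial$ are: $\mathsf{PSL}^\partial$: partial negative p-morphisms; $\mathsf{ISL}^\partial$: partial positive p-morphisms; $\mathsf{bISL}^\partial$: partial p-morphisms; $\mathsf{PDL}^\partial$: (total) negative p-morphisms; $\mathsf{IL}^\partial$: almost total partial positive p-morphisms; $\mathsf{HA}^\partial$: (total) p-morphisms. For a homomorphism $f\colon\boldsymbol{A}\to\boldsymbol{B}$, $f_\ast\colon\boldsymbol{B}_\ast\rightharpoonup\boldsymbol{A}_\ast$ has domain $\{F\in\boldsymbol{B}_\ast: f^{-1}[F]\in\boldsymbol{A}_\ast\}$ and $f_\ast(F)=f^{-1}[F]$. For a poset $\mathbb{X}$, $\mathsf{Up}_{\mathsf{K}}(\mathbb{X})$ is the reduct to the language of $\mathsf{K}$ of the Heyting algebra $\langle\mathsf{Up}(\mathbb{X});\cap,\cup,\to,\emptyset,X\rangle$ of upsets, where $U\to V = X\smallsetminus{\downarrow}(U\smallsetminus V)$. For $p\colon\mathbb{X}\rightharpoonup\mathbb{Y}$,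 $\mathsf{Up}_{\mathsf{K}}(p)(U) = X\smallsetminus{\downarrow}p^{-1}[Y\smallsetminus U]$. *)

theory Defs
  imports Main
begin

datatype variety = PSL | ISL | bISL | PDL | IL | HA

text \<open>Algebras in the full Heyting signature; an algebra of a variety K only
  uses the operations of the language of K (the other fields are ignored).\<close>
record 'a alg =
  acar :: "'a set"
  ameet :: "'a \<Rightarrow> 'a \<Rightarrow> 'a"
  ajoin :: "'a \<Rightarrow> 'a \<Rightarrow> 'a"
  aneg :: "'a \<Rightarrow> 'a"
  aimp :: "'a \<Rightarrow> 'a \<Rightarrow> 'a"
  abot :: "'a"
  atop :: "'a"

definition has_join :: "variety \<Rightarrow> bool" where
  "has_join K \<longleftrightarrow> K \<in> {PDL, IL, HA}"
definition has_neg :: "variety \<Rightarrow> bool" where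
  "has_neg K \<longleftrightarrow> K \<in> {PSL, PDL}"
definition has_imp :: "variety \<Rightarrow> bool" where
  "has_imp K \<longleftrightarrow> K \<in> {ISL, bISL, IL, HA}"
definition has_bot :: "variety \<Rightarrow> bool" where
  "has_bot K \<longleftrightarrow> K \<in> {PSL, bISL, PDL, HA}"

definition ale :: "'a alg \<Rightarrow> 'a \<Rightarrow> 'a \<Rightarrow> bool" where
  "ale A a b \<longleftrightarrow> ameet A a b = a"

definition closed_K :: "variety \<Rightarrow> 'a alg \<Rightarrow> bool" where
  "closed_K K A \<longleftrightarrow>
     atop A \<in> acar A \<and>
     (\<forall>a\<in>acar A. \<forall>b\<in>acar A. ameet A a b \<in> acar A) \<and>
     (has_join K \<longrightarrow> (\<forall>a\<in>acar A. \<forall>b\<in>acar A. ajoin A a b \<in> acar A)) \<and>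
     (has_imp K \<longrightarrow> (\<forall>a\<in>acar A. \<forall>b\<in>acar A. aimp A a b \<in> acar A)) \<and>
     (has_neg K \<longrightarrow> (\<forall>a\<in>acar A. aneg A a \<in> acar A)) \<and>
     (has_bot K \<longrightarrow> abot A \<in> acar A)"

definition semilattice_alg :: "'a alg \<Rightarrow> bool" where
  "semilattice_alg A \<longleftrightarrow>
     (\<forall>a\<in>acar A. ameet A a a = a) \<and>
     (\<forall>a\<in>acar A. \<forall>b\<in>acar A. ameet A a b = ameet A b a) \<and>
     (\<forall>a\<in>acar A. \<forall>b\<in>acar A. \<forall>c\<in>acar A. ameet A (ameet A a b) c = ameet A a (ameet A b c))"

definition lattice_alg :: "'a alg \<Rightarrow> bool" where
  "lattice_alg A \<longleftrightarrow> semilattice_alg A \<and>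
     (\<forall>a\<in>acar A. \<forall>b\<in>acar A. ajoin A a b = ajoin A b a) \<and>
     (\<forall>a\<in>acar A. \<forall>b\<in>acar A. \<forall>c\<in>acar A. ajoin A (ajoin A a b) c = ajoin A a (ajoin A b c)) \<and>
     (\<forall>a\<in>acar A. \<forall>b\<in>acar A. ameet A a (ajoin A a b) = a) \<and>
     (\<forall>a\<in>acar A. \<forall>b\<in>acar A. ajoin A a (ameet A a b) = a)"

definition distributive_alg :: "'a alg \<Rightarrow> bool" where
  "distributive_alg A \<longleftrightarrow>
     (\<forall>a\<in>acar A. \<forall>b\<in>acar A. \<forall>c\<in>acar A.
        ameet A a (ajoin A b c) = ajoin A (ameet A a b) (ameet A a c))"

text \<open>Membership of an algebra in the variety K (as in the context):
  PSL: semilattice with min 0, max 1 and pseudocomplement law;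
  ISL: semilattice with max 1 and residuation;  bISL: ISL with minimum 0;
  PDL: distributive lattice with PSL-reduct;  IL: lattice with ISL-reduct;
  HA: lattice with bISL-reduct (= Heyting algebra).\<close>
definition in_K :: "variety \<Rightarrow> 'a alg \<Rightarrow> bool" where
  "in_K K A \<longleftrightarrow> closed_K K A \<and> semilattice_alg A \<and>
     (\<forall>a\<in>acar A. ale A a (atop A)) \<and>
     (has_bot K \<longrightarrow> (\<forall>a\<in>acar A. ale A (abot A) a)) \<and>
     (has_neg K \<longrightarrow> (\<forall>a\<in>acar A. \<forall>c\<in>acar A.
         ameet A c a = abot A \<longleftrightarrow> ale A c (aneg A a))) \<and>
     (has_imp K \<longrightarrow> (\<forall>a\<in>acar A. \<forall>b\<in>acar A. \<forall>c\<in>acar A.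
         ale A (ameet A c a) b \<longleftrightarrow> ale A c (aimp A a b))) \<and>
     (has_join K \<longrightarrow> lattice_alg A) \<and>
     (K = PDL \<longrightarrow> distributive_alg A)"

definition hom_K :: "variety \<Rightarrow> 'a alg \<Rightarrow> 'b alg \<Rightarrow> ('a \<Rightarrow> 'b) \<Rightarrow> bool" where
  "hom_K K A B f \<longleftrightarrow>
     (\<forall>a\<in>acar A. f a \<in> acar B) \<and>
     f (atop A) = atop B \<and>
     (\<forall>a\<in>acar A. \<forall>b\<in>acar A. f (ameet A a b) = ameet B (f a) (f b)) \<and>
     (has_join K \<longrightarrow> (\<forall>a\<in>acar A. \<forall>b\<in>acar A. f (ajoin A a b) = ajoin B (f a) (f b))) \<and>
     (has_imp K \<longrightarrow> (\<forall>a\<in>acar A. \<forall>b\<in>acar A. f (aimp A a b) = aimp B (f a) (f b))) \<and>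
     (has_neg K \<longrightarrow> (\<forall>a\<in>acar A. f (aneg A a) = aneg B (f a))) \<and>
     (has_bot K \<longrightarrow> f (abot A) = abot B)"

definition is_filter :: "'a alg \<Rightarrow> 'a set \<Rightarrow> bool" where
  "is_filter A F \<longleftrightarrow> F \<subseteq> acar A \<and> F \<noteq> {} \<and>
     (\<forall>a\<in>F. \<forall>b\<in>acar A. ale A a b \<longrightarrow> b \<in> F) \<and>
     (\<forall>a\<in>F. \<forall>b\<in>F. ameet A a b \<in> F)"

definition mi_filter :: "'a alg \<Rightarrow> 'a set \<Rightarrow> bool" where
  "mi_filter A F \<longleftrightarrow> is_filter A F \<and> F \<noteq> acar A \<and>
     (\<forall>G H. is_filter A G \<and> is_filter A H \<and> F = G \<inter> H \<longrightarrow> G = F \<or> H = F)"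

text \<open>The carrier of \<open>A\<^sub>*\<close>; it is ordered by inclusion.\<close>
definition dual_set :: "'a alg \<Rightarrow> 'a set set" where
  "dual_set A = {F. mi_filter A F}"

definition preimg :: "'a alg \<Rightarrow> ('a \<Rightarrow> 'b) \<Rightarrow> 'b set \<Rightarrow> 'a set" where
  "preimg A f F = {a \<in> acar A. f a \<in> F}"

definition fstar :: "'a alg \<Rightarrow> 'b alg \<Rightarrow> ('a \<Rightarrow> 'b) \<Rightarrow> 'b set \<Rightarrow> 'a set option" where
  "fstar A B f F = (if F \<in> dual_set B \<and> preimg A f F \<in> dual_set A
                    then Some (preimg A f F) else None)"

definition poset :: "'x set \<Rightarrow> ('x \<Rightarrow> 'x \<Rightarrow> bool) \<Rightarrow> bool" where
  "poset X le \<longleftrightarrow> (\<forall>x\<in>X. le x x) \<and>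
     (\<forall>x\<in>X. \<forall>y\<in>X. le x y \<and> le y x \<longrightarrow> x = y) \<and>
     (\<forall>x\<in>X. \<forall>y\<in>X. \<forall>z\<in>X. le x y \<and> le y z \<longrightarrow> le x z)"

definition upcl :: "'x set \<Rightarrow> ('x \<Rightarrow> 'x \<Rightarrow> bool) \<Rightarrow> 'x set \<Rightarrow> 'x set" where
  "upcl X le S = {x \<in> X. \<exists>s\<in>S. le s x}"

definition downcl :: "'x set \<Rightarrow> ('x \<Rightarrow> 'x \<Rightarrow> bool) \<Rightarrow> 'x set \<Rightarrow> 'x set" where
  "downcl X le S = {x \<in> X. \<exists>s\<in>S. le x s}"

definition partial_map :: "'x set \<Rightarrow> 'y set \<Rightarrow> ('x \<rightharpoonup> 'y) \<Rightarrow> bool" where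
  "partial_map X Y p \<longleftrightarrow> dom p \<subseteq> X \<and> ran p \<subseteq> Y"

definition order_pres :: "'x set \<Rightarrow> ('x \<Rightarrow> 'x \<Rightarrow> bool) \<Rightarrow> 'y set \<Rightarrow> ('y \<Rightarrow> 'y \<Rightarrow> bool)
    \<Rightarrow> ('x \<rightharpoonup> 'y) \<Rightarrow> bool" where
  "order_pres X leX Y leY p \<longleftrightarrow> partial_map X Y p \<and>
     (\<forall>x\<in>dom p. \<forall>z\<in>dom p. leX x z \<longrightarrow> leY (the (p x)) (the (p z)))"

definition neg_pmor :: "'x set \<Rightarrow> ('x \<Rightarrow> 'x \<Rightarrow> bool) \<Rightarrow> 'y set \<Rightarrow> ('y \<Rightarrow> 'y \<Rightarrow> bool)
    \<Rightarrow> ('x \<rightharpoonup> 'y) \<Rightarrow> bool" where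
  "neg_pmor X leX Y leY p \<longleftrightarrow> order_pres X leX Y leY p \<and>
     X = downcl X leX {x \<in> X. upcl X leX {x} \<subseteq> dom p} \<and>
     (\<forall>x\<in>dom p. \<forall>y\<in>Y. leY (the (p x)) y \<longrightarrow>
        (\<exists>z\<in>dom p. leX x z \<and> leY y (the (p z))))"

definition pos_pmor :: "'x set \<Rightarrow> ('x \<Rightarrow> 'x \<Rightarrow> bool) \<Rightarrow> 'y set \<Rightarrow> ('y \<Rightarrow> 'y \<Rightarrow> bool)
    \<Rightarrow> ('x \<rightharpoonup> 'y) \<Rightarrow> bool" where
  "pos_pmor X leX Y leY p \<longleftrightarrow> order_pres X leX Y leY p \<and>
     (\<forall>x\<in>dom p. \<forall>y\<in>Y. leY (the (p x)) y \<longrightarrow>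
        (\<exists>z\<in>dom p. leX x z \<and> y = the (p z)))"

definition total_map :: "'x set \<Rightarrow> ('x \<rightharpoonup> 'y) \<Rightarrow> bool" where
  "total_map X p \<longleftrightarrow> dom p = X"

definition almost_total :: "'x set \<Rightarrow> ('x \<Rightarrow> 'x \<Rightarrow> bool) \<Rightarrow> ('x \<rightharpoonup> 'y) \<Rightarrow> bool" where
  "almost_total X le p \<longleftrightarrow> downcl X le (dom p) \<subseteq> dom p"

definition in_Kdual :: "variety \<Rightarrow> 'x set \<Rightarrow> ('x \<Rightarrow> 'x \<Rightarrow> bool) \<Rightarrow> 'y set \<Rightarrow> ('y \<Rightarrow> 'y \<Rightarrow> bool)
    \<Rightarrow> ('x \<rightharpoonup> 'y) \<Rightarrow> bool" where
  "in_Kdual K X leX Y leY p \<longleftrightarrow>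
     (case K of
        PSL \<Rightarrow> neg_pmor X leX Y leY p
      | ISL \<Rightarrow> pos_pmor X leX Y leY p
      | bISL \<Rightarrow> neg_pmor X leX Y leY p \<and> pos_pmor X leX Y leY p
      | PDL \<Rightarrow> total_map X p \<and> neg_pmor X leX Y leY p
      | IL \<Rightarrow> almost_total X leX p \<and> pos_pmor X leX Y leY p
      | HA \<Rightarrow> total_map X p \<and> neg_pmor X leX Y leY p \<and> pos_pmor X leX Y leY p)"

definition upsets :: "'x set \<Rightarrow> ('x \<Rightarrow> 'x \<Rightarrow> bool) \<Rightarrow> 'x set set" where
  "upsets X le = {U. U \<subseteq> X \<and> upcl X le U \<subseteq> U}"

definition up_imp :: "'x set \<Rightarrow> ('x \<Rightarrow> 'x \<Rightarrow> bool) \<Rightarrow> 'x set \<Rightarrow> 'x set \<Rightarrow> 'x set" where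
  "up_imp X le U V = X - downcl X le (U - V)"

text \<open>The Heyting algebra of upsets; \<open>Up\<^sub>K(X)\<close> is its K-reduct, which is
  exactly what \<open>in_K K\<close> and \<open>hom_K K\<close> look at.\<close>
definition Up_alg :: "'x set \<Rightarrow> ('x \<Rightarrow> 'x \<Rightarrow> bool) \<Rightarrow> 'x set alg" where
  "Up_alg X le = \<lparr> acar = upsets X le, ameet = (\<inter>), ajoin = (\<union>),
     aneg = (\<lambda>U. up_imp X le U {}), aimp = up_imp X le, abot = {}, atop = X \<rparr>"

definition pmap_preimg :: "'x set \<Rightarrow> ('x \<rightharpoonup> 'y) \<Rightarrow> 'y set \<Rightarrow> 'x set" where
  "pmap_preimg X p S = {x \<in> X. \<exists>y\<in>S. p x = Some y}"

definition Up_map :: "'x set \<Rightarrow> ('x \<Rightarrow> 'x \<Rightarrow> bool) \<Rightarrow> 'y set \<Rightarrow> ('x \<rightharpoonup> 'y) \<Rightarrow> 'y set \<Rightarrow> 'x set" where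
  "Up_map X le Y p U = X - downcl X le (pmap_preimg X p (Y - U))"

end

theory Submission
  imports Defs
begin


locale sl =
  fixes A :: "'a alg"
  assumes sla: "semilattice_alg A"
  and mcl: "\<lbrakk>a \<in> acar A; b \<in> acar A\<rbrakk> \<Longrightarrow> ameet A a b \<in> acar A"
  and topc: "atop A \<in> acar A"
  and topg: "a \<in> acar A \<Longrightarrow> ale A a (atop A)"
begin

lemma idem: "a \<in> acar A \<Longrightarrow> ameet A a a = a"
  using sla by (simp add: semilattice_alg_def)
lemma comm: "a \<in> acar A \<Longrightarrow> b \<in> acar A \<Longrightarrow> ameet A a b = ameet A b a"
  using sla by (simp add: semilattice_alg_def)
lemma assoc: "a \<in> acar A \<Longrightarrow> b \<in> acar A \<Longrightarrow> c \<in> acar A \<Longrightarrow>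
   ameet A (ameet A a b) c = ameet A a (ameet A b c)"
  using sla by (simp add: semilattice_alg_def)

lemma lrefl: "a \<in> acar A \<Longrightarrow> ale A a a"
  by (simp add: ale_def idem)
lemma lantisym: "a \<in> acar A \<Longrightarrow> b \<in> acar A \<Longrightarrow> ale A a b \<Longrightarrow> ale A b a \<Longrightarrow> a = b"
  unfolding ale_def using comm[of a b] by simp
lemma ltrans: assumes "a \<in> acar A" "b \<in> acar A" "c \<in> acar A" "ale A a b" "ale A b c" shows "ale A a c"
proof -
  have "ameet A a c = ameet A (ameet A a b) c" using assms(4) by (simp add: ale_def)
  also have "\<dots> = ameet A a (ameet A b c)" using assms(1-3) by (rule assoc)
  also have "\<dots> = a" using assms(4,5) by (simp add: ale_def)
  finally show ?thesis by (simp add: ale_def)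
qed
lemma lb1: assumes "a \<in> acar A" "b \<in> acar A" shows "ale A (ameet A a b) a"
proof -
  have "ameet A (ameet A a b) a = ameet A a (ameet A a b)" using assms by (intro comm mcl)
  also have "\<dots> = ameet A (ameet A a a) b" using assoc[of a a b] assms by simp
  also have "\<dots> = ameet A a b" using assms by (simp add: idem)
  finally show ?thesis by (simp add: ale_def)
qed
lemma lb2: assumes "a \<in> acar A" "b \<in> acar A" shows "ale A (ameet A a b) b"
proof -
  have "ameet A (ameet A a b) b = ameet A a (ameet A b b)" using assms by (intro assoc)
  also have "\<dots> = ameet A a b" using assms by (simp add: idem)
  finally show ?thesis by (simp add: ale_def)
qed
lemma glb: assumes "a \<in> acar A" "b \<in> acar A" "c \<in> acar A" "ale A c a" "ale A c b" shows "ale A c (ameet A a b)"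
proof -
  have "ameet A c (ameet A a b) = ameet A (ameet A c a) b" using assms(1-3) assoc[of c a b] by simp
  also have "\<dots> = c" using assms(4,5) by (simp add: ale_def)
  finally show ?thesis by (simp add: ale_def)
qed
lemma mmono: "a \<in> acar A \<Longrightarrow> b \<in> acar A \<Longrightarrow> a' \<in> acar A \<Longrightarrow> b' \<in> acar A \<Longrightarrow>
  ale A a a' \<Longrightarrow> ale A b b' \<Longrightarrow> ale A (ameet A a b) (ameet A a' b')"
proof -
  assume h: "a \<in> acar A" "b \<in> acar A" "a' \<in> acar A" "b' \<in> acar A" "ale A a a'" "ale A b b'"
  have "ale A (ameet A a b) a'" using h lb1[of a b] ltrans[of "ameet A a b" a a'] mcl by blast
  moreover have "ale A (ameet A a b) b'" using h lb2[of a b] ltrans[of "ameet A a b" b b'] mcl by blast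
  ultimately show ?thesis using h glb mcl by blast
qed

lemma top_in: "is_filter A F \<Longrightarrow> atop A \<in> F"
  unfolding is_filter_def by (meson ex_in_conv subsetD topc topg)
lemma filt_up: "is_filter A F \<Longrightarrow> a \<in> F \<Longrightarrow> b \<in> acar A \<Longrightarrow> ale A a b \<Longrightarrow> b \<in> F"
  unfolding is_filter_def by blast
lemma filt_meet: "is_filter A F \<Longrightarrow> a \<in> F \<Longrightarrow> b \<in> F \<Longrightarrow> ameet A a b \<in> F"
  unfolding is_filter_def by blast
lemma filt_sub: "is_filter A F \<Longrightarrow> F \<subseteq> acar A"
  unfolding is_filter_def by blast

definition gen :: "'a set \<Rightarrow> 'a set \<Rightarrow> 'a set" where
  "gen F S = {b \<in> acar A. \<exists>x\<in>F. \<exists>y\<in>S. ale A (ameet A x y) b}"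

lemma gen_filter:
  assumes F: "is_filter A F" and S: "S \<subseteq> acar A" "S \<noteq> {}"
    and Sm: "\<And>a b. a \<in> S \<Longrightarrow> b \<in> S \<Longrightarrow> ameet A a b \<in> S"
  shows "is_filter A (gen F S)" "F \<subseteq> gen F S" "S \<subseteq> gen F S"
proof -
  have Fs: "F \<subseteq> acar A" using F filt_sub by blast
  show "F \<subseteq> gen F S"
  proof
    fix x assume "x \<in> F"
    moreover obtain y where "y \<in> S" using S by blast
    ultimately show "x \<in> gen F S" unfolding gen_def using Fs S lb1 by blast
  qed
  show "S \<subseteq> gen F S"
  proof
    fix y assume y: "y \<in> S"
    have "atop A \<in> F" using F top_in by blast
    moreover have "ale A (ameet A (atop A) y) y" using y S lb2 topc by blast
    ultimately show "y \<in> gen F S" unfolding gen_def using y S by blast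
  qed
  show "is_filter A (gen F S)"
    unfolding is_filter_def
  proof (intro conjI ballI impI)
    show "gen F S \<subseteq> acar A" unfolding gen_def by blast
    show "gen F S \<noteq> {}" using \<open>F \<subseteq> gen F S\<close> F unfolding is_filter_def by blast
    show "b \<in> gen F S" if h: "a \<in> gen F S" "b \<in> acar A" "ale A a b" for a b
    proof -
      obtain x y where "x \<in> F" "y \<in> S" "ale A (ameet A x y) a" "a \<in> acar A" using h(1) unfolding gen_def by blast
      moreover have "ameet A x y \<in> acar A" using calculation Fs S by (auto intro: mcl)
      ultimately show ?thesis using h(2,3) ltrans unfolding gen_def by blast
    qed
    show "ameet A a b \<in> gen F S" if a: "a \<in> gen F S" and b: "b \<in> gen F S" for a b
    proof -
      obtain x y where xy: "x \<in> F" "y \<in> S" "ale A (ameet A x y) a" "a \<in> acar A" using a unfolding gen_def by blast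
      obtain x' y' where xy': "x' \<in> F" "y' \<in> S" "ale A (ameet A x' y') b" "b \<in> acar A" using b unfolding gen_def by blast
      have c: "x \<in> acar A" "y \<in> acar A" "x' \<in> acar A" "y' \<in> acar A" using xy xy' Fs S by auto
      have e: "ameet A (ameet A x x') (ameet A y y') = ameet A (ameet A x y) (ameet A x' y')"
      proof -
        have "ameet A (ameet A x x') (ameet A y y') = ameet A x (ameet A x' (ameet A y y'))" using c by (simp add: assoc mcl)
        also have "ameet A x' (ameet A y y') = ameet A y (ameet A x' y')"
        proof -
          have "ameet A x' (ameet A y y') = ameet A (ameet A x' y) y'" using c by (simp add: assoc)
          also have "\<dots> = ameet A (ameet A y x') y'" using c comm[of x' y] by simp
          also have "\<dots> = ameet A y (ameet A x' y')" using c by (simp add: assoc)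
          finally show ?thesis .
        qed
        also have "ameet A x (ameet A y (ameet A x' y')) = ameet A (ameet A x y) (ameet A x' y')" using c by (simp add: assoc mcl)
        finally show ?thesis .
      qed
      have "ale A (ameet A (ameet A x y) (ameet A x' y')) (ameet A a b)"
        using c xy xy' by (intro mmono) (auto intro: mcl)
      then have "ale A (ameet A (ameet A x x') (ameet A y y')) (ameet A a b)" using e by simp
      moreover have "ameet A x x' \<in> F" using F xy(1) xy'(1) by (rule filt_meet)
      moreover have "ameet A y y' \<in> S" using Sm xy(2) xy'(2) by blast
      moreover have "ameet A a b \<in> acar A" using xy(4) xy'(4) by (rule mcl)
      ultimately show ?thesis unfolding gen_def by blast
    qed
  qed
qed

end

lemma preimg_filter:
  assumes "sl A" "sl B" "\<forall>a\<in>acar A. f a \<in> acar B" "f (atop A) = atop B"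
    "\<forall>a\<in>acar A. \<forall>b\<in>acar A. f (ameet A a b) = ameet B (f a) (f b)"
    "is_filter B H"
  shows "is_filter A (preimg A f H)"
  unfolding is_filter_def
proof (intro conjI ballI impI)
  show "preimg A f H \<subseteq> acar A" unfolding preimg_def by blast
  have "atop B \<in> H" using assms(2,6) by (rule sl.top_in)
  then have "atop A \<in> preimg A f H" using assms(4) sl.topc[OF assms(1)] unfolding preimg_def by simp
  then show "preimg A f H \<noteq> {}" by blast
  show "b \<in> preimg A f H" if h: "a \<in> preimg A f H" "b \<in> acar A" "ale A a b" for a b
  proof -
    have "f (ameet A a b) = f a" using h(3) by (simp add: ale_def)
    moreover have "a \<in> acar A" using h(1) unfolding preimg_def by simp
    ultimately have "ameet B (f a) (f b) = f a" using assms(5) h(2) by metis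
    then have "ale B (f a) (f b)" unfolding ale_def .
    moreover have "f a \<in> H" "f b \<in> acar B" using h assms(3) unfolding preimg_def by auto
    ultimately have "f b \<in> H" using sl.filt_up[OF assms(2,6)] by blast
    then show ?thesis using h(2) unfolding preimg_def by simp
  qed
  show "ameet A a b \<in> preimg A f H" if h: "a \<in> preimg A f H" "b \<in> preimg A f H" for a b
  proof -
    have "a \<in> acar A" "b \<in> acar A" "f a \<in> H" "f b \<in> H" using h unfolding preimg_def by auto
    moreover have "ameet B (f a) (f b) \<in> H" using calculation sl.filt_meet[OF assms(2,6)] by blast
    ultimately show ?thesis using assms(5) sl.mcl[OF assms(1)] unfolding preimg_def by auto
  qed
qed

lemma chain_filter:
  assumes "sl B" "C \<noteq> {}" "\<forall>H\<in>C. is_filter B H" "\<forall>X\<in>C. \<forall>Y\<in>C. X \<subseteq> Y \<or> Y \<subseteq> X"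
  shows "is_filter B (\<Union>C)"
  unfolding is_filter_def
proof (intro conjI ballI impI)
  show "\<Union>C \<subseteq> acar B"
  proof
    fix x assume "x \<in> \<Union>C"
    then obtain H where "H \<in> C" "x \<in> H" by blast
    then show "x \<in> acar B" using assms(3) sl.filt_sub[OF assms(1), of H] by blast
  qed
  obtain H where "H \<in> C" using assms(2) by blast
  then have "atop B \<in> H" using assms(3) sl.top_in[OF assms(1), of H] by blast
  then show "\<Union>C \<noteq> {}" using \<open>H \<in> C\<close> by blast
  show "b \<in> \<Union>C" if h: "a \<in> \<Union>C" "b \<in> acar B" "ale B a b" for a b
  proof -
    obtain X where "X \<in> C" "a \<in> X" using h by blast
    then have "b \<in> X" using h assms(3) sl.filt_up[OF assms(1), of X a b] by blast
    then show ?thesis using \<open>X \<in> C\<close> by blast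
  qed
  show "ameet B a b \<in> \<Union>C" if h: "a \<in> \<Union>C" "b \<in> \<Union>C" for a b
  proof -
    obtain X Y where "X \<in> C" "Y \<in> C" "a \<in> X" "b \<in> Y" using h by blast
    then have "X \<subseteq> Y \<or> Y \<subseteq> X" using assms(4) by blast
    then show ?thesis
    proof
      assume "X \<subseteq> Y"
      then have "ameet B a b \<in> Y" using \<open>a \<in> X\<close> \<open>b \<in> Y\<close> \<open>Y \<in> C\<close> assms(3) sl.filt_meet[OF assms(1), of Y a b] by blast
      then show ?thesis using \<open>Y \<in> C\<close> by blast
    next
      assume "Y \<subseteq> X"
      then have "ameet B a b \<in> X" using \<open>a \<in> X\<close> \<open>b \<in> Y\<close> \<open>X \<in> C\<close> assms(3) sl.filt_meet[OF assms(1), of X a b] by blast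
      then show ?thesis using \<open>X \<in> C\<close> by blast
    qed
  qed
qed

lemma ext_mi:
  assumes slA: "sl A" and slB: "sl B" and hc: "\<forall>a\<in>acar A. f a \<in> acar B" and ht: "f (atop A) = atop B"
    and hm: "\<forall>a\<in>acar A. \<forall>b\<in>acar A. f (ameet A a b) = ameet B (f a) (f b)"
    and F0: "is_filter B F0" and pG: "preimg A f F0 = G" and G: "mi_filter A G"
  shows "\<exists>M. mi_filter B M \<and> F0 \<subseteq> M \<and> preimg A f M = G"
proof -
  define S where "S = {H. is_filter B H \<and> F0 \<subseteq> H \<and> preimg A f H = G}"
  have "\<exists>M\<in>S. \<forall>X\<in>S. M \<subseteq> X \<longrightarrow> X = M"
  proof (rule subset_Zorn_nonempty)
    show "S \<noteq> {}" using F0 pG unfolding S_def by blast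
    fix C assume C: "C \<noteq> {}" "subset.chain S C"
    then have CS: "C \<subseteq> S" and ch: "\<forall>X\<in>C. \<forall>Y\<in>C. X \<subseteq> Y \<or> Y \<subseteq> X"
      unfolding subset_chain_def by auto
    have "is_filter B (\<Union>C)" using chain_filter[OF slB C(1) _ ch] CS unfolding S_def by blast
    moreover have "F0 \<subseteq> \<Union>C" using C(1) CS unfolding S_def by blast
    moreover have "preimg A f (\<Union>C) = G"
    proof -
      have "preimg A f (\<Union>C) = (\<Union>H\<in>C. preimg A f H)" unfolding preimg_def by blast
      also have "\<dots> = G" using C(1) CS unfolding S_def by auto
      finally show ?thesis .
    qed
    ultimately show "\<Union>C \<in> S" unfolding S_def by blast
  qed
  then obtain M where MS: "M \<in> S" and Mmax: "\<forall>X\<in>S. M \<subseteq> X \<longrightarrow> X = M" by blast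
  have Mf: "is_filter B M" and F0M: "F0 \<subseteq> M" and pM: "preimg A f M = G" using MS unfolding S_def by auto
  have "mi_filter B M"
    unfolding mi_filter_def
  proof (intro conjI allI impI)
    show "is_filter B M" by fact
    show "M \<noteq> acar B"
    proof
      assume "M = acar B"
      then have "preimg A f M = acar A" using hc unfolding preimg_def by auto
      then show False using pM G unfolding mi_filter_def by auto
    qed
    fix H1 H2 assume h: "is_filter B H1 \<and> is_filter B H2 \<and> M = H1 \<inter> H2"
    have p1: "is_filter A (preimg A f H1)" "is_filter A (preimg A f H2)"
      using h preimg_filter[OF slA slB hc ht hm] by auto
    have "preimg A f H1 \<inter> preimg A f H2 = G" using h pM unfolding preimg_def by auto
    then have "preimg A f H1 = G \<or> preimg A f H2 = G" using G p1 unfolding mi_filter_def by blast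
    moreover have "H1 \<in> S" if "preimg A f H1 = G" using that h F0M unfolding S_def by blast
    moreover have "H2 \<in> S" if "preimg A f H2 = G" using that h F0M unfolding S_def by blast
    moreover have "M \<subseteq> H1" "M \<subseteq> H2" using h by auto
    ultimately show "H1 = M \<or> H2 = M" using Mmax by blast
  qed
  then show ?thesis using F0M pM by blast
qed

definition maxfilt :: "'a alg \<Rightarrow> 'a set \<Rightarrow> bool" where
  "maxfilt A M \<longleftrightarrow> is_filter A M \<and> M \<noteq> acar A \<and>
     (\<forall>H. is_filter A H \<and> M \<subseteq> H \<and> H \<noteq> acar A \<longrightarrow> H = M)"

lemma maxfilt_mi: assumes "maxfilt A M" shows "mi_filter A M"
proof -
  have h: "is_filter A M" "M \<noteq> acar A" "\<And>H. is_filter A H \<Longrightarrow> M \<subseteq> H \<Longrightarrow> H \<noteq> acar A \<Longrightarrow> H = M"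
    using assms unfolding maxfilt_def by auto
  have "G = M \<or> H = M" if g: "is_filter A G" "is_filter A H" "M = G \<inter> H" for G H
  proof (rule ccontr)
    assume n: "\<not> (G = M \<or> H = M)"
    have "G = acar A" using h(3)[of G] g n by blast
    moreover have "H = acar A" using h(3)[of H] g n by blast
    ultimately show False using h(2) g(3) by simp
  qed
  then show ?thesis unfolding mi_filter_def using h(1,2) by blast
qed

lemma proper_bot:
  assumes "sl B" "abot B \<in> acar B" "\<forall>a\<in>acar B. ale B (abot B) a" "is_filter B H"
  shows "H \<noteq> acar B \<longleftrightarrow> abot B \<notin> H"
proof
  assume "H \<noteq> acar B"
  then obtain x where x: "x \<in> acar B" "x \<notin> H" using sl.filt_sub[OF assms(1,4)] by blast
  show "abot B \<notin> H"
  proof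
    assume "abot B \<in> H"
    then have "x \<in> H" using sl.filt_up[OF assms(1,4), of "abot B" x] assms(3) x(1) by blast
    then show False using x(2) by simp
  qed
next
  assume "abot B \<notin> H" then show "H \<noteq> acar B" using assms(2) by blast
qed

lemma ext_max:
  assumes slB: "sl B" and b: "abot B \<in> acar B" "\<forall>a\<in>acar B. ale B (abot B) a"
    and F: "is_filter B F" "F \<noteq> acar B"
  shows "\<exists>M. maxfilt B M \<and> F \<subseteq> M"
proof -
  define S where "S = {H. is_filter B H \<and> F \<subseteq> H \<and> H \<noteq> acar B}"
  have "\<exists>M\<in>S. \<forall>X\<in>S. M \<subseteq> X \<longrightarrow> X = M"
  proof (rule subset_Zorn_nonempty)
    show "S \<noteq> {}" using F unfolding S_def by blast
    fix C assume C: "C \<noteq> {}" "subset.chain S C"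
    then have CS: "C \<subseteq> S" and ch: "\<forall>X\<in>C. \<forall>Y\<in>C. X \<subseteq> Y \<or> Y \<subseteq> X"
      unfolding subset_chain_def by auto
    have fU: "is_filter B (\<Union>C)" using chain_filter[OF slB C(1) _ ch] CS unfolding S_def by blast
    moreover have "F \<subseteq> \<Union>C" using C(1) CS unfolding S_def by blast
    moreover have "abot B \<notin> H" if "H \<in> C" for H
    proof -
      have "is_filter B H" "H \<noteq> acar B" using that CS unfolding S_def by auto
      then show ?thesis using proper_bot[OF slB b] by blast
    qed
    then have "abot B \<notin> \<Union>C" by blast
    then have "\<Union>C \<noteq> acar B" using b by blast
    ultimately show "\<Union>C \<in> S" unfolding S_def by blast
  qed
  then obtain M where M: "M \<in> S" "\<forall>X\<in>S. M \<subseteq> X \<longrightarrow> X = M" by blast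
  have "maxfilt B M"
    unfolding maxfilt_def
  proof (intro conjI allI impI)
    show "is_filter B M" "M \<noteq> acar B" using M(1) unfolding S_def by auto
    fix H assume "is_filter B H \<and> M \<subseteq> H \<and> H \<noteq> acar B"
    moreover then have "H \<in> S" using M(1) unfolding S_def by auto
    ultimately show "H = M" using M(2) by blast
  qed
  moreover have "F \<subseteq> M" using M(1) unfolding S_def by auto
  ultimately show ?thesis by blast
qed



lemma inK_sl: assumes "in_K K A" shows "sl A"
  using assms unfolding in_K_def closed_K_def sl_def by auto

lemma inK_imp: assumes "in_K K A" "has_imp K" "a \<in> acar A" "b \<in> acar A" "c \<in> acar A"
  shows "ale A (ameet A c a) b \<longleftrightarrow> ale A c (aimp A a b)" "aimp A a b \<in> acar A"
  using assms unfolding in_K_def closed_K_def by auto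

lemma inK_bot: assumes "in_K K A" "has_bot K"
  shows "abot A \<in> acar A" "\<forall>a\<in>acar A. ale A (abot A) a"
  using assms unfolding in_K_def closed_K_def by auto

definition negK :: "variety \<Rightarrow> 'a alg \<Rightarrow> 'a \<Rightarrow> 'a" where
  "negK K A a = (if has_neg K then aneg A a else aimp A a (abot A))"

lemma negK: assumes "in_K K A" "has_bot K" "a \<in> acar A" "c \<in> acar A"
  shows "negK K A a \<in> acar A" "ameet A c a = abot A \<longleftrightarrow> ale A c (negK K A a)"
proof -
  interpret sl A using assms(1) by (rule inK_sl)
  have b: "abot A \<in> acar A" "\<forall>a\<in>acar A. ale A (abot A) a" using inK_bot[OF assms(1,2)] by auto
  show "negK K A a \<in> acar A"
  proof (cases "has_neg K")
    case True then show ?thesis using assms unfolding negK_def in_K_def closed_K_def by auto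
  next
    case False
    then have "has_imp K" using assms(2) unfolding has_bot_def has_neg_def has_imp_def by auto
    then show ?thesis using False inK_imp(2)[OF assms(1) _ assms(3) b(1) assms(3)] unfolding negK_def by auto
  qed
  show "ameet A c a = abot A \<longleftrightarrow> ale A c (negK K A a)"
  proof (cases "has_neg K")
    case True then show ?thesis using assms unfolding negK_def in_K_def by auto
  next
    case False
    then have hi: "has_imp K" using assms(2) unfolding has_bot_def has_neg_def has_imp_def by auto
    have cm: "ameet A c a \<in> acar A" using assms(4,3) by (rule mcl)
    have "ameet A c a = abot A \<longleftrightarrow> ale A (ameet A c a) (abot A)"
      using lantisym[OF cm b(1)] b(2) cm lrefl[OF b(1)] by auto
    also have "\<dots> \<longleftrightarrow> ale A c (aimp A a (abot A))" using inK_imp(1)[OF assms(1) hi assms(3) b(1) assms(4)] .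
    finally show ?thesis using False unfolding negK_def by simp
  qed
qed

lemma hom_parts: assumes "hom_K K A B f"
  shows "\<forall>a\<in>acar A. f a \<in> acar B" "f (atop A) = atop B"
    "\<forall>a\<in>acar A. \<forall>b\<in>acar A. f (ameet A a b) = ameet B (f a) (f b)"
  using assms unfolding hom_K_def by auto

lemma hom_negK: assumes "hom_K K A B f" "has_bot K" "a \<in> acar A" "in_K K A"
  shows "f (negK K A a) = negK K B (f a)"
proof (cases "has_neg K")
  case True then show ?thesis using assms unfolding hom_K_def negK_def by auto
next
  case False
  then have hi: "has_imp K" using assms(2) unfolding has_bot_def has_neg_def has_imp_def by auto
  have "abot A \<in> acar A" using inK_bot[OF assms(4,2)] by auto
  then show ?thesis using False hi assms unfolding hom_K_def negK_def by auto
qed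

lemma hom_mono: assumes "sl A" "hom_K K A B f" "a \<in> acar A" "b \<in> acar A" "ale A a b"
  shows "ale B (f a) (f b)"
  using assms hom_parts[OF assms(2)] unfolding ale_def by metis



locale lat0 = sl A for A :: "'a alg" +
  assumes la: "lattice_alg A"
  and jcl: "\<lbrakk>a \<in> acar A; b \<in> acar A\<rbrakk> \<Longrightarrow> ajoin A a b \<in> acar A"
begin
lemma jcomm: "a \<in> acar A \<Longrightarrow> b \<in> acar A \<Longrightarrow> ajoin A a b = ajoin A b a"
  using la by (simp add: lattice_alg_def)
lemma jassoc: "a \<in> acar A \<Longrightarrow> b \<in> acar A \<Longrightarrow> c \<in> acar A \<Longrightarrow>
   ajoin A (ajoin A a b) c = ajoin A a (ajoin A b c)"
  using la by (simp add: lattice_alg_def)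
lemma abs1: "a \<in> acar A \<Longrightarrow> b \<in> acar A \<Longrightarrow> ameet A a (ajoin A a b) = a"
  using la by (simp add: lattice_alg_def)
lemma abs2: "a \<in> acar A \<Longrightarrow> b \<in> acar A \<Longrightarrow> ajoin A a (ameet A a b) = a"
  using la by (simp add: lattice_alg_def)

lemma ub1: "a \<in> acar A \<Longrightarrow> b \<in> acar A \<Longrightarrow> ale A a (ajoin A a b)"
  by (simp add: ale_def abs1)
lemma ub2: "a \<in> acar A \<Longrightarrow> b \<in> acar A \<Longrightarrow> ale A b (ajoin A a b)"
  using abs1[of b a] jcomm[of a b] by (simp add: ale_def)

lemma jle: assumes "a \<in> acar A" "c \<in> acar A" "ale A a c" shows "ajoin A c a = c"
proof -
  have "ameet A c a = a" using assms comm by (simp add: ale_def)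
  then show ?thesis using abs2[OF assms(2,1)] by simp
qed

lemma lub: assumes "a \<in> acar A" "b \<in> acar A" "c \<in> acar A" "ale A a c" "ale A b c"
  shows "ale A (ajoin A a b) c"
proof -
  have 1: "ajoin A c a = c" "ajoin A c b = c" using jle assms by auto
  have "ajoin A (ajoin A a b) c = ajoin A a (ajoin A b c)" using assms by (simp add: jassoc)
  also have "\<dots> = ajoin A a c" using 1 assms jcomm[of b c] by simp
  also have "\<dots> = c" using 1 assms jcomm[of a c] by simp
  finally have "ajoin A (ajoin A a b) c = c" .
  then have "ameet A (ajoin A a b) c = ameet A (ajoin A a b) (ajoin A (ajoin A a b) c)" by simp
  also have "\<dots> = ajoin A a b" using assms by (simp add: abs1 jcl)
  finally show ?thesis by (simp add: ale_def)
qed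


end

locale lat = lat0 A for A :: "'a alg" +
  assumes dle: "\<lbrakk>a \<in> acar A; b \<in> acar A; c \<in> acar A\<rbrakk> \<Longrightarrow>
      ale A (ameet A a (ajoin A b c)) (ajoin A (ameet A a b) (ameet A a c))"
begin

definition prime :: "'a set \<Rightarrow> bool" where
  "prime F \<longleftrightarrow> is_filter A F \<and> F \<noteq> acar A \<and>
     (\<forall>a\<in>acar A. \<forall>b\<in>acar A. ajoin A a b \<in> F \<longrightarrow> a \<in> F \<or> b \<in> F)"

lemma prime_mi: assumes "prime F" shows "mi_filter A F"
proof -
  have h: "is_filter A F" "F \<noteq> acar A" "\<And>a b. a \<in> acar A \<Longrightarrow> b \<in> acar A \<Longrightarrow> ajoin A a b \<in> F \<Longrightarrow> a \<in> F \<or> b \<in> F"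
    using assms unfolding prime_def by auto
  have "G = F \<or> H = F" if g: "is_filter A G" "is_filter A H" "F = G \<inter> H" for G H
  proof (rule ccontr)
    assume n: "\<not> (G = F \<or> H = F)"
    obtain a where a: "a \<in> G" "a \<notin> F" using n g(3) by blast
    obtain b where b: "b \<in> H" "b \<notin> F" using n g(3) by blast
    have ac: "a \<in> acar A" "b \<in> acar A" using a b g filt_sub by blast+
    have "ajoin A a b \<in> G" using filt_up[OF g(1) a(1) jcl[OF ac] ub1[OF ac]] .
    moreover have "ajoin A a b \<in> H" using filt_up[OF g(2) b(1) jcl[OF ac] ub2[OF ac]] .
    ultimately have "ajoin A a b \<in> F" using g(3) by blast
    then show False using h(3)[OF ac] a b by blast
  qed
  then show ?thesis unfolding mi_filter_def using h(1,2) by blast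
qed

lemma mi_prime: assumes "mi_filter A F" shows "prime F"
proof -
  have h: "is_filter A F" "F \<noteq> acar A" "\<And>G H. is_filter A G \<Longrightarrow> is_filter A H \<Longrightarrow> F = G \<inter> H \<Longrightarrow> G = F \<or> H = F"
    using assms unfolding mi_filter_def by auto
  have Fs: "F \<subseteq> acar A" using h(1) by (rule filt_sub)
  have "a \<in> F \<or> b \<in> F" if ab: "a \<in> acar A" "b \<in> acar A" "ajoin A a b \<in> F" for a b
  proof (rule ccontr)
    assume n: "\<not> (a \<in> F \<or> b \<in> F)"
    have sa: "{a} \<subseteq> acar A" "{a} \<noteq> {}" "\<And>x y. x \<in> {a} \<Longrightarrow> y \<in> {a} \<Longrightarrow> ameet A x y \<in> {a}"
      using ab idem by auto
    have sb: "{b} \<subseteq> acar A" "{b} \<noteq> {}" "\<And>x y. x \<in> {b} \<Longrightarrow> y \<in> {b} \<Longrightarrow> ameet A x y \<in> {b}"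
      using ab idem by auto
    note ga = gen_filter[OF h(1) sa] and gb = gen_filter[OF h(1) sb]
    have "gen F {a} \<inter> gen F {b} \<subseteq> F"
    proof
      fix x assume x: "x \<in> gen F {a} \<inter> gen F {b}"
      then obtain m1 m2 where m: "m1 \<in> F" "m2 \<in> F" "ale A (ameet A m1 a) x" "ale A (ameet A m2 b) x" "x \<in> acar A"
        unfolding gen_def by blast
      have mc: "m1 \<in> acar A" "m2 \<in> acar A" using m Fs by auto
      define m where "m = ameet A m1 m2"
      have mF: "m \<in> F" unfolding m_def using filt_meet[OF h(1) m(1,2)] .
      have mA: "m \<in> acar A" using mF Fs by auto
      have "ale A (ameet A m a) (ameet A m1 a)" unfolding m_def
        using mc ab by (intro mmono lb1 lrefl mcl) auto
      then have 1: "ale A (ameet A m a) x" using ltrans[of "ameet A m a" "ameet A m1 a" x] m mc mA ab mcl by blast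
      have "ale A (ameet A m b) (ameet A m2 b)" unfolding m_def
        using mc ab by (intro mmono lb2 lrefl mcl) auto
      then have 2: "ale A (ameet A m b) x" using ltrans[of "ameet A m b" "ameet A m2 b" x] m mc mA ab mcl by blast
      have "ale A (ajoin A (ameet A m a) (ameet A m b)) x" using lub 1 2 mA ab m(5) mcl by blast
      then have "ale A (ameet A m (ajoin A a b)) x"
        using dle[OF mA ab(1,2)] ltrans mA ab m(5) mcl jcl by meson
      moreover have "ameet A m (ajoin A a b) \<in> F" using filt_meet[OF h(1) mF ab(3)] .
      ultimately show "x \<in> F" using filt_up[OF h(1)] m(5) by blast
    qed
    then have "F = gen F {a} \<inter> gen F {b}" using ga(2) gb(2) by blast
    then have "gen F {a} = F \<or> gen F {b} = F" using h(3) ga(1) gb(1) by blast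
    then show False using ga(3) gb(3) n by blast
  qed
  then show ?thesis unfolding prime_def using h(1,2) by blast
qed

end

lemma inK_lat: assumes "in_K K A" "has_join K" shows "lat A"
proof -
  interpret sl A using assms(1) by (rule inK_sl)
  have la: "lattice_alg A" and jc: "\<And>a b. a \<in> acar A \<Longrightarrow> b \<in> acar A \<Longrightarrow> ajoin A a b \<in> acar A"
    using assms unfolding in_K_def closed_K_def by auto
  interpret lat0 A by unfold_locales (use la jc in auto)
  show ?thesis
  proof unfold_locales
    fix a b c assume abc: "a \<in> acar A" "b \<in> acar A" "c \<in> acar A"
    show "ale A (ameet A a (ajoin A b c)) (ajoin A (ameet A a b) (ameet A a c))"
    proof (cases "K = PDL")
      case True
      then have "distributive_alg A" using assms(1) unfolding in_K_def by auto
      then show ?thesis using abc lrefl mcl jcl unfolding distributive_alg_def by auto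
    next
      case False
      then have hi: "has_imp K" using assms(2) unfolding has_join_def has_imp_def by auto
      define d where "d = ajoin A (ameet A a b) (ameet A a c)"
      have dA: "d \<in> acar A" unfolding d_def using abc by (intro jcl mcl)
      have "ale A (ameet A b a) d" unfolding d_def using abc comm[of a b] ub1 mcl by metis
      then have 1: "ale A b (aimp A a d)" using inK_imp(1)[OF assms(1) hi abc(1) dA abc(2)] by simp
      have "ale A (ameet A c a) d" unfolding d_def using abc comm[of a c] ub2 mcl by metis
      then have 2: "ale A c (aimp A a d)" using inK_imp(1)[OF assms(1) hi abc(1) dA abc(3)] by simp
      have iA: "aimp A a d \<in> acar A" using inK_imp(2)[OF assms(1) hi abc(1) dA abc(1)] .
      have "ale A (ajoin A b c) (aimp A a d)" using lub[OF abc(2,3) iA 1 2] .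
      then have "ale A (ameet A (ajoin A b c) a) d"
        using inK_imp(1)[OF assms(1) hi abc(1) dA jcl[OF abc(2,3)]] by simp
      then show ?thesis unfolding d_def[symmetric] using comm[OF abc(1) jcl[OF abc(2,3)]] by simp
    qed
  qed
qed



lemma fstar_dom: "F \<in> dom (fstar A B f) \<longleftrightarrow> F \<in> dual_set B \<and> preimg A f F \<in> dual_set A"
  unfolding fstar_def dom_def by auto

lemma fstar_the: "F \<in> dom (fstar A B f) \<Longrightarrow> the (fstar A B f F) = preimg A f F"
  unfolding fstar_def dom_def by (auto split: if_splits)

lemma fstar_ran: "ran (fstar A B f) \<subseteq> dual_set A"
  unfolding fstar_def ran_def by (auto split: if_splits)

lemma fstar_op: "order_pres (dual_set B) (\<subseteq>) (dual_set A) (\<subseteq>) (fstar A B f)"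
  unfolding order_pres_def partial_map_def
proof (intro conjI ballI impI)
  show "dom (fstar A B f) \<subseteq> dual_set B" using fstar_dom by blast
  show "ran (fstar A B f) \<subseteq> dual_set A" by (rule fstar_ran)
  fix x z assume "x \<in> dom (fstar A B f)" "z \<in> dom (fstar A B f)" "x \<subseteq> z"
  then show "the (fstar A B f x) \<subseteq> the (fstar A B f z)" using fstar_the[of x A B f] fstar_the[of z A B f]
    unfolding preimg_def by auto
qed

lemma dual_filter: "F \<in> dual_set A \<Longrightarrow> is_filter A F \<and> F \<noteq> acar A"
  unfolding dual_set_def mi_filter_def by auto

locale hs =
  fixes K :: variety and A :: "'a alg" and B :: "'b alg" and f :: "'a \<Rightarrow> 'b"
  assumes iA: "in_K K A" and iB: "in_K K B" and hf: "hom_K K A B f"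
begin

lemma slA: "sl A" using iA by (rule inK_sl)
lemma slB: "sl B" using iB by (rule inK_sl)
lemma hc: "\<forall>a\<in>acar A. f a \<in> acar B" using hom_parts[OF hf] by blast
lemma ht: "f (atop A) = atop B" using hom_parts[OF hf] by blast
lemma hm: "\<forall>a\<in>acar A. \<forall>b\<in>acar A. f (ameet A a b) = ameet B (f a) (f b)" using hom_parts[OF hf] by blast

lemma img_S: assumes "is_filter A G"
  shows "f ` G \<subseteq> acar B" "f ` G \<noteq> {}" "\<And>x y. x \<in> f ` G \<Longrightarrow> y \<in> f ` G \<Longrightarrow> ameet B x y \<in> f ` G"
proof -
  have Gs: "G \<subseteq> acar A" using sl.filt_sub[OF slA assms] .
  show "f ` G \<subseteq> acar B" using Gs hc by blast
  show "f ` G \<noteq> {}" using assms unfolding is_filter_def by blast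
  fix x y assume "x \<in> f ` G" "y \<in> f ` G"
  then obtain g h where "g \<in> G" "h \<in> G" "x = f g" "y = f h" by blast
  then show "ameet B x y \<in> f ` G" using hm Gs sl.filt_meet[OF slA assms] by (metis image_eqI subsetD)
qed

lemma pos:
  assumes hi: "has_imp K" and F: "F \<in> dom (fstar A B f)" and G: "G \<in> dual_set A"
    and sub: "the (fstar A B f F) \<subseteq> G"
  shows "\<exists>M\<in>dom (fstar A B f). F \<subseteq> M \<and> G = the (fstar A B f M)"
proof -
  have FB: "F \<in> dual_set B" using F fstar_dom[of F A B f] by blast
  have pF: "preimg A f F \<subseteq> G" using sub fstar_the[OF F] by simp
  have Ff: "is_filter B F" using dual_filter[OF FB] by blast
  have Gf: "is_filter A G" and Gm: "mi_filter A G" using dual_filter[OF G] G unfolding dual_set_def by auto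
  have Gs: "G \<subseteq> acar A" using sl.filt_sub[OF slA Gf] .
  have Fs: "F \<subseteq> acar B" using sl.filt_sub[OF slB Ff] .
  note gf = sl.gen_filter[OF slB Ff img_S[OF Gf]]
  have pre: "preimg A f (sl.gen B F (f ` G)) = G"
  proof
    show "G \<subseteq> preimg A f (sl.gen B F (f ` G))" using gf(3) Gs unfolding preimg_def by blast
    show "preimg A f (sl.gen B F (f ` G)) \<subseteq> G"
    proof
      fix a assume "a \<in> preimg A f (sl.gen B F (f ` G))"
      then obtain x g where a: "a \<in> acar A" "x \<in> F" "g \<in> G" "ale B (ameet B x (f g)) (f a)"
        unfolding preimg_def sl.gen_def[OF slB] by blast
      have gA: "g \<in> acar A" using a Gs by blast
      have xB: "x \<in> acar B" using a Fs by blast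
      have "ale B x (aimp B (f g) (f a))" using inK_imp(1)[OF iB hi _ _ xB] a(1,4) gA hc by blast
      moreover have "aimp B (f g) (f a) = f (aimp A g a)" using hf hi gA a(1) unfolding hom_K_def by auto
      moreover have iA': "aimp A g a \<in> acar A" using inK_imp(2)[OF iA hi gA a(1) gA] .
      ultimately have "f (aimp A g a) \<in> F" using sl.filt_up[OF slB Ff a(2)] hc by auto
      then have "aimp A g a \<in> G" using pF iA' unfolding preimg_def by blast
      moreover have "ale A (ameet A (aimp A g a) g) a"
        using inK_imp(1)[OF iA hi gA a(1) iA'] sl.lrefl[OF slA iA'] by blast
      ultimately show "a \<in> G" using sl.filt_meet[OF slA Gf] sl.filt_up[OF slA Gf] a(1,3) by blast
    qed
  qed
  obtain M where M: "mi_filter B M" "sl.gen B F (f ` G) \<subseteq> M" "preimg A f M = G"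
    using ext_mi[OF slA slB hc ht hm gf(1) pre Gm] by blast
  have "M \<in> dual_set B" "preimg A f M \<in> dual_set A" using M G unfolding dual_set_def by auto
  then have "M \<in> dom (fstar A B f)" by (intro fstar_dom[THEN iffD2] conjI)
  moreover have "F \<subseteq> M" using M(2) gf(2) by blast
  ultimately show ?thesis using M(3) fstar_the by metis
qed

lemma inj_ran:
  assumes inj: "inj_on f (acar A)"
  shows "ran (fstar A B f) = dual_set A"
proof
  show "ran (fstar A B f) \<subseteq> dual_set A" by (rule fstar_ran)
  show "dual_set A \<subseteq> ran (fstar A B f)"
  proof
    fix G assume G: "G \<in> dual_set A"
    have Gf: "is_filter A G" and Gm: "mi_filter A G" using dual_filter[OF G] G unfolding dual_set_def by auto
    have Gs: "G \<subseteq> acar A" using sl.filt_sub[OF slA Gf] .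
    have T: "is_filter B {atop B}"
      unfolding is_filter_def
    proof (intro conjI ballI impI)
      show "{atop B} \<subseteq> acar B" using sl.topc[OF slB] by blast
      show "ameet B a b \<in> {atop B}" if "a \<in> {atop B}" "b \<in> {atop B}" for a b
        using that sl.idem[OF slB sl.topc[OF slB]] by simp
      show "b \<in> {atop B}" if "a \<in> {atop B}" "b \<in> acar B" "ale B a b" for a b
        using that sl.lantisym[OF slB _ sl.topc[OF slB]] sl.topg[OF slB] by auto
    qed simp
    note gf = sl.gen_filter[OF slB T img_S[OF Gf]]
    have pre: "preimg A f (sl.gen B {atop B} (f ` G)) = G"
    proof
      show "G \<subseteq> preimg A f (sl.gen B {atop B} (f ` G))" using gf(3) Gs unfolding preimg_def by blast
      show "preimg A f (sl.gen B {atop B} (f ` G)) \<subseteq> G"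
      proof
        fix a assume "a \<in> preimg A f (sl.gen B {atop B} (f ` G))"
        then obtain g where a: "a \<in> acar A" "g \<in> G" "ale B (ameet B (atop B) (f g)) (f a)"
          unfolding preimg_def sl.gen_def[OF slB] by blast
        have gA: "g \<in> acar A" using a Gs by blast
        have fgB: "f g \<in> acar B" using gA hc by blast
        have "ameet B (atop B) (f g) = f g"
          using sl.topg[OF slB fgB] sl.comm[OF slB fgB sl.topc[OF slB]] unfolding ale_def by simp
        then have "ameet B (f g) (f a) = f g" using a(3) unfolding ale_def by simp
        then have "f (ameet A g a) = f g" using hm gA a(1) by simp
        then have "ameet A g a = g" using inj sl.mcl[OF slA gA a(1)] gA unfolding inj_on_def by blast
        then show "a \<in> G" using sl.filt_up[OF slA Gf a(2) a(1)] unfolding ale_def by blast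
      qed
    qed
    obtain M where M: "mi_filter B M" "preimg A f M = G"
      using ext_mi[OF slA slB hc ht hm gf(1) pre Gm] by blast
    have "M \<in> dual_set B" "preimg A f M \<in> dual_set A" using M G unfolding dual_set_def by auto
  then have "M \<in> dom (fstar A B f)" by (intro fstar_dom[THEN iffD2] conjI)
    then have "fstar A B f M = Some G" using M(2) fstar_the[of M A B f] by (auto simp: dom_def)
    then show "G \<in> ran (fstar A B f)" unfolding ran_def by blast
  qed
qed

end


lemma maxchar:
  assumes iA: "in_K K A" and hb: "has_bot K" and Mf: "is_filter A M" and Mp: "M \<noteq> acar A"
  shows "maxfilt A M \<longleftrightarrow> (\<forall>a\<in>acar A. a \<notin> M \<longrightarrow> negK K A a \<in> M)"
proof -
  interpret sl A using iA by (rule inK_sl)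
  note b = inK_bot[OF iA hb]
  have Ms: "M \<subseteq> acar A" using filt_sub[OF Mf] .
  show ?thesis
  proof
    assume mx: "maxfilt A M"
    show "\<forall>a\<in>acar A. a \<notin> M \<longrightarrow> negK K A a \<in> M"
    proof (intro ballI impI)
      fix a assume a: "a \<in> acar A" "a \<notin> M"
      have sa: "{a} \<subseteq> acar A" "{a} \<noteq> {}" "\<And>x y. x \<in> {a} \<Longrightarrow> y \<in> {a} \<Longrightarrow> ameet A x y \<in> {a}"
        using a idem by auto
      note g = gen_filter[OF Mf sa]
      have "gen M {a} \<noteq> M" using g(3) a(2) by blast
      then have "gen M {a} = acar A" using mx g(1,2) unfolding maxfilt_def by blast
      then have "abot A \<in> gen M {a}" using b by blast
      then obtain x where x: "x \<in> M" "ale A (ameet A x a) (abot A)" unfolding gen_def by blast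
      have xA: "x \<in> acar A" using x Ms by blast
      have "ameet A x a = abot A" using lantisym[OF mcl[OF xA a(1)] b(1) x(2)] b(2) mcl[OF xA a(1)] by blast
      then have "ale A x (negK K A a)" using negK(2)[OF iA hb a(1) xA] by simp
      then show "negK K A a \<in> M" using filt_up[OF Mf x(1) negK(1)[OF iA hb a(1) xA]] by blast
    qed
  next
    assume n: "\<forall>a\<in>acar A. a \<notin> M \<longrightarrow> negK K A a \<in> M"
    show "maxfilt A M"
      unfolding maxfilt_def
    proof (intro conjI allI impI)
      show "is_filter A M" "M \<noteq> acar A" by fact+
      fix H assume H: "is_filter A H \<and> M \<subseteq> H \<and> H \<noteq> acar A"
      show "H = M"
      proof (rule ccontr)
        assume "H \<noteq> M"
        then obtain a where a: "a \<in> H" "a \<notin> M" using H by blast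
        have aA: "a \<in> acar A" using a H filt_sub by blast
        have nA: "negK K A a \<in> acar A" using negK(1)[OF iA hb aA aA] .
        have "negK K A a \<in> H" using n a aA H by blast
        moreover have "ameet A (negK K A a) a = abot A" using negK(2)[OF iA hb aA nA] lrefl[OF nA] by simp
        ultimately have "abot A \<in> H" using filt_meet[of H] H a(1) by metis
        then show False using proper_bot[OF sl_axioms b, of H] H by blast
      qed
    qed
  qed
qed

context hs begin

lemma maxpre: assumes hb: "has_bot K" and M: "maxfilt B M"
  shows "maxfilt A (preimg A f M)"
proof -
  have Mf: "is_filter B M" and Mp: "M \<noteq> acar B" using M unfolding maxfilt_def by auto
  have pf: "is_filter A (preimg A f M)" using preimg_filter[OF slA slB hc ht hm Mf] .
  have "abot B \<notin> M" using proper_bot[OF slB inK_bot[OF iB hb] Mf] Mp by blast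
  moreover have "f (abot A) = abot B" using hf hb unfolding hom_K_def by auto
  ultimately have "abot A \<notin> preimg A f M" unfolding preimg_def by auto
  then have pp: "preimg A f M \<noteq> acar A" using inK_bot[OF iA hb] by blast
  have mc: "\<forall>b\<in>acar B. b \<notin> M \<longrightarrow> negK K B b \<in> M" using maxchar[OF iB hb Mf Mp] M by blast
  have "\<forall>a\<in>acar A. a \<notin> preimg A f M \<longrightarrow> negK K A a \<in> preimg A f M"
  proof (intro ballI impI)
    fix a assume a: "a \<in> acar A" "a \<notin> preimg A f M"
    then have "f a \<notin> M" unfolding preimg_def by simp
    then have "negK K B (f a) \<in> M" using mc hc a(1) by blast
    then have "f (negK K A a) \<in> M" using hom_negK[OF hf hb a(1) iA] by simp
    then show "negK K A a \<in> preimg A f M" using negK(1)[OF iA hb a(1) a(1)] unfolding preimg_def by simp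
  qed
  then show ?thesis using maxchar[OF iA hb pf pp] by blast
qed

lemma max_dom: assumes hb: "has_bot K" and M: "maxfilt B M"
  shows "M \<in> dom (fstar A B f)"
proof -
  have "M \<in> dual_set B" "preimg A f M \<in> dual_set A"
    using maxfilt_mi[OF M] maxfilt_mi[OF maxpre[OF hb M]] unfolding dual_set_def by auto
  then show ?thesis by (intro fstar_dom[THEN iffD2] conjI)
qed

lemma neg: assumes hb: "has_bot K"
  shows "neg_pmor (dual_set B) (\<subseteq>) (dual_set A) (\<subseteq>) (fstar A B f)"
  unfolding neg_pmor_def
proof (intro conjI ballI impI)
  show "order_pres (dual_set B) (\<subseteq>) (dual_set A) (\<subseteq>) (fstar A B f)" by (rule fstar_op)
  note bB = inK_bot[OF iB hb]
  show "dual_set B = downcl (dual_set B) (\<subseteq>) {x \<in> dual_set B. upcl (dual_set B) (\<subseteq>) {x} \<subseteq> dom (fstar A B f)}"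
  proof
    show "downcl (dual_set B) (\<subseteq>) {x \<in> dual_set B. upcl (dual_set B) (\<subseteq>) {x} \<subseteq> dom (fstar A B f)} \<subseteq> dual_set B"
      unfolding downcl_def by blast
    show "dual_set B \<subseteq> downcl (dual_set B) (\<subseteq>) {x \<in> dual_set B. upcl (dual_set B) (\<subseteq>) {x} \<subseteq> dom (fstar A B f)}"
    proof
      fix F assume F: "F \<in> dual_set B"
      obtain M where M: "maxfilt B M" "F \<subseteq> M" using ext_max[OF slB bB] dual_filter[OF F] by blast
      have MB: "M \<in> dual_set B" using maxfilt_mi[OF M(1)] unfolding dual_set_def by simp
      have "upcl (dual_set B) (\<subseteq>) {M} \<subseteq> dom (fstar A B f)"
      proof
        fix N assume "N \<in> upcl (dual_set B) (\<subseteq>) {M}"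
        then have N: "N \<in> dual_set B" "M \<subseteq> N" unfolding upcl_def by auto
        have "N = M" using M(1) dual_filter[OF N(1)] N(2) unfolding maxfilt_def by blast
        then show "N \<in> dom (fstar A B f)" using max_dom[OF hb M(1)] by simp
      qed
      then show "F \<in> downcl (dual_set B) (\<subseteq>) {x \<in> dual_set B. upcl (dual_set B) (\<subseteq>) {x} \<subseteq> dom (fstar A B f)}"
        unfolding downcl_def using F M(2) MB by blast
    qed
  qed
  fix F G assume F: "F \<in> dom (fstar A B f)" and G: "G \<in> dual_set A" and sub: "the (fstar A B f F) \<subseteq> G"
  have FB: "F \<in> dual_set B" using F fstar_dom[of F A B f] by blast
  have pF: "preimg A f F \<subseteq> G" using sub fstar_the[OF F] by simp
  have Ff: "is_filter B F" using dual_filter[OF FB] by blast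
  have Gf: "is_filter A G" and Gp: "G \<noteq> acar A" using dual_filter[OF G] by auto
  have Gs: "G \<subseteq> acar A" using sl.filt_sub[OF slA Gf] .
  have Fs: "F \<subseteq> acar B" using sl.filt_sub[OF slB Ff] .
  note gf = sl.gen_filter[OF slB Ff img_S[OF Gf]]
  note bA = inK_bot[OF iA hb]
  have "abot B \<notin> sl.gen B F (f ` G)"
  proof
    assume "abot B \<in> sl.gen B F (f ` G)"
    then obtain x g where a: "x \<in> F" "g \<in> G" "ale B (ameet B x (f g)) (abot B)"
      unfolding sl.gen_def[OF slB] by blast
    have gA: "g \<in> acar A" using a Gs by blast
    have xB: "x \<in> acar B" using a Fs by blast
    have fg: "f g \<in> acar B" using hc gA by blast
    have "ameet B x (f g) = abot B"
      using sl.lantisym[OF slB sl.mcl[OF slB xB fg] bB(1) a(3)] bB(2) sl.mcl[OF slB xB fg] by blast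
    then have "ale B x (negK K B (f g))" using negK(2)[OF iB hb fg xB] by simp
    then have "ale B x (f (negK K A g))" using hom_negK[OF hf hb gA iA] by simp
    moreover have nA: "negK K A g \<in> acar A" using negK(1)[OF iA hb gA gA] .
    ultimately have "f (negK K A g) \<in> F" using sl.filt_up[OF slB Ff a(1)] hc by blast
    then have "negK K A g \<in> G" using pF nA unfolding preimg_def by blast
    moreover have "ameet A (negK K A g) g = abot A" using negK(2)[OF iA hb gA nA] sl.lrefl[OF slA nA] by simp
    ultimately have "abot A \<in> G" using sl.filt_meet[OF slA Gf] a(2) by metis
    then show False using proper_bot[OF slA bA Gf] Gp by blast
  qed
  then have "sl.gen B F (f ` G) \<noteq> acar B" using bB by blast
  then obtain M where M: "maxfilt B M" "sl.gen B F (f ` G) \<subseteq> M" using ext_max[OF slB bB gf(1)] by blast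
  have "M \<in> dom (fstar A B f)" using max_dom[OF hb M(1)] .
  moreover have "F \<subseteq> M" using M(2) gf(2) by blast
  moreover have "G \<subseteq> the (fstar A B f M)"
    using fstar_the[OF calculation(1)] M(2) gf(3) Gs unfolding preimg_def by blast
  ultimately show "\<exists>z\<in>dom (fstar A B f). F \<subseteq> z \<and> G \<subseteq> the (fstar A B f z)" by blast
qed

lemma pre_prime: assumes hj: "has_join K" and F: "F \<in> dual_set B" and p: "preimg A f F \<noteq> acar A"
  shows "preimg A f F \<in> dual_set A"
proof -
  interpret LA: lat A using inK_lat[OF iA hj] .
  interpret LB: lat B using inK_lat[OF iB hj] .
  have Ff: "is_filter B F" using dual_filter[OF F] by blast
  have pB: "LB.prime F" using LB.mi_prime F unfolding dual_set_def by blast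
  have "LA.prime (preimg A f F)"
    unfolding LA.prime_def
  proof (intro conjI ballI impI)
    show "is_filter A (preimg A f F)" using preimg_filter[OF slA slB hc ht hm Ff] .
    show "preimg A f F \<noteq> acar A" by fact
    fix a b assume ab: "a \<in> acar A" "b \<in> acar A" "ajoin A a b \<in> preimg A f F"
    have "f (ajoin A a b) = ajoin B (f a) (f b)" using hf hj ab unfolding hom_K_def by auto
    then have "ajoin B (f a) (f b) \<in> F" using ab unfolding preimg_def by auto
    then have "f a \<in> F \<or> f b \<in> F" using pB hc ab unfolding LB.prime_def by blast
    then show "a \<in> preimg A f F \<or> b \<in> preimg A f F" using ab unfolding preimg_def by auto
  qed
  then show ?thesis using LA.prime_mi unfolding dual_set_def by blast
qed

lemma total: assumes hj: "has_join K" and hb: "has_bot K"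
  shows "total_map (dual_set B) (fstar A B f)"
  unfolding total_map_def
proof
  show "dom (fstar A B f) \<subseteq> dual_set B" using fstar_dom by blast
  show "dual_set B \<subseteq> dom (fstar A B f)"
  proof
    fix F assume F: "F \<in> dual_set B"
    have Ff: "is_filter B F" and Fp: "F \<noteq> acar B" using dual_filter[OF F] by auto
    have "abot B \<notin> F" using proper_bot[OF slB inK_bot[OF iB hb] Ff] Fp by blast
    moreover have "f (abot A) = abot B" using hf hb unfolding hom_K_def by auto
    ultimately have "abot A \<notin> preimg A f F" unfolding preimg_def by auto
    then have "preimg A f F \<noteq> acar A" using inK_bot[OF iA hb] by blast
    then have "preimg A f F \<in> dual_set A" using pre_prime[OF hj F] by blast
    then show "F \<in> dom (fstar A B f)" using F by (intro fstar_dom[THEN iffD2] conjI)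
  qed
qed

lemma almost: assumes hj: "has_join K"
  shows "almost_total (dual_set B) (\<subseteq>) (fstar A B f)"
  unfolding almost_total_def
proof
  fix F assume "F \<in> downcl (dual_set B) (\<subseteq>) (dom (fstar A B f))"
  then obtain F' where F: "F \<in> dual_set B" "F' \<in> dom (fstar A B f)" "F \<subseteq> F'" unfolding downcl_def by blast
  have "preimg A f F' \<in> dual_set A" using F(2) fstar_dom by blast
  then have "preimg A f F' \<noteq> acar A" using dual_filter by blast
  moreover have "preimg A f F \<subseteq> preimg A f F'" using F(3) unfolding preimg_def by auto
  moreover have "preimg A f F' \<subseteq> acar A" unfolding preimg_def by auto
  ultimately have "preimg A f F \<noteq> acar A" by blast
  then have "preimg A f F \<in> dual_set A" using pre_prime[OF hj F(1)] by blast
  then show "F \<in> dom (fstar A B f)" using F(1) by (intro fstar_dom[THEN iffD2] conjI)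
qed

end


lemma Upm: assumes pm: "partial_map X Y p"
  shows "x \<in> Up_map X le Y p U \<longleftrightarrow> x \<in> X \<and> (\<forall>w y. le x w \<longrightarrow> p w = Some y \<longrightarrow> y \<in> U)"
proof -
  have d: "\<And>w y. p w = Some y \<Longrightarrow> w \<in> X \<and> y \<in> Y" using pm unfolding partial_map_def dom_def ran_def by blast
  have "x \<in> Up_map X le Y p U \<longleftrightarrow> x \<in> X \<and> \<not> (\<exists>s y. le x s \<and> s \<in> X \<and> y \<in> Y \<and> y \<notin> U \<and> p s = Some y)"
    unfolding Up_map_def downcl_def pmap_preimg_def by auto
  then show ?thesis using d by metis
qed

lemma upsets_iff: "U \<in> upsets Y le \<longleftrightarrow> U \<subseteq> Y \<and> (\<forall>u\<in>U. \<forall>y\<in>Y. le u y \<longrightarrow> y \<in> U)"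
  unfolding upsets_def upcl_def by auto

lemma up_imp_iff: "y \<in> up_imp Y le U V \<longleftrightarrow> y \<in> Y \<and> \<not> (\<exists>u. le y u \<and> u \<in> U \<and> u \<notin> V)"
  unfolding up_imp_def downcl_def by auto

locale ps =
  fixes X :: "'x set" and leX and Y :: "'y set" and leY and p :: "'x \<rightharpoonup> 'y"
  assumes pX: "poset X leX" and pY: "poset Y leY" and op: "order_pres X leX Y leY p"
begin

lemma pm: "partial_map X Y p" using op unfolding order_pres_def by blast
lemma pd: "p w = Some y \<Longrightarrow> w \<in> X \<and> y \<in> Y" using pm unfolding partial_map_def dom_def ran_def by blast
lemma mono: assumes "p w = Some y" "p w' = Some y'" "leX w w'" shows "leY y y'"
proof -
  have "w \<in> dom p" "w' \<in> dom p" using assms by auto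
  then have "leY (the (p w)) (the (p w'))" using op assms(3) unfolding order_pres_def by blast
  then show ?thesis using assms by simp
qed
lemma reflX: "x \<in> X \<Longrightarrow> leX x x" using pX unfolding poset_def by simp
lemma transX: "x \<in> X \<Longrightarrow> y \<in> X \<Longrightarrow> z \<in> X \<Longrightarrow> leX x y \<Longrightarrow> leX y z \<Longrightarrow> leX x z"
  using pX unfolding poset_def by meson
lemma reflY: "x \<in> Y \<Longrightarrow> leY x x" using pY unfolding poset_def by simp

abbreviation "UM \<equiv> Up_map X leX Y p"

lemma UM_iff: "x \<in> UM U \<longleftrightarrow> x \<in> X \<and> (\<forall>w y. leX x w \<longrightarrow> p w = Some y \<longrightarrow> y \<in> U)"
  using Upm[OF pm] .

lemma UM_up: "UM U \<in> upsets X leX"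
  unfolding upsets_iff
proof (intro conjI ballI impI)
  show "UM U \<subseteq> X" unfolding subset_iff UM_iff by blast
  fix u x assume u: "u \<in> UM U" and x: "x \<in> X" "leX u x"
  have uX: "u \<in> X" and uU: "\<And>w y. leX u w \<Longrightarrow> p w = Some y \<Longrightarrow> y \<in> U" using u unfolding UM_iff by auto
  show "x \<in> UM U" unfolding UM_iff
  proof (intro conjI allI impI)
    show "x \<in> X" by fact
    fix w y assume w: "leX x w" "p w = Some y"
    have "w \<in> X" using pd[OF w(2)] by blast
    then have "leX u w" using transX[OF uX x(1) _ x(2) w(1)] by blast
    then show "y \<in> U" using uU w(2) by blast
  qed
qed

lemma UM_top: "UM Y = X"
proof (rule set_eqI)
  fix x show "x \<in> UM Y \<longleftrightarrow> x \<in> X" unfolding UM_iff by (auto dest: pd)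
qed

lemma UM_meet: "UM (U \<inter> V) = UM U \<inter> UM V"
proof (rule set_eqI)
  fix x show "x \<in> UM (U \<inter> V) \<longleftrightarrow> x \<in> UM U \<inter> UM V" unfolding Int_iff UM_iff by blast
qed

lemma UM_join:
  assumes DC: "\<And>x w. x \<in> X \<Longrightarrow> w \<in> dom p \<Longrightarrow> leX x w \<Longrightarrow> x \<in> dom p"
    and U: "U \<in> upsets Y leY" and V: "V \<in> upsets Y leY"
  shows "UM (U \<union> V) = UM U \<union> UM V"
proof
  show "UM U \<union> UM V \<subseteq> UM (U \<union> V)" unfolding subset_iff Un_iff UM_iff by blast
  show "UM (U \<union> V) \<subseteq> UM U \<union> UM V"
  proof
    fix x assume x: "x \<in> UM (U \<union> V)"
    show "x \<in> UM U \<union> UM V"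
    proof (rule ccontr)
      assume "x \<notin> UM U \<union> UM V"
      then obtain w1 y1 w2 y2 where w: "leX x w1" "p w1 = Some y1" "y1 \<notin> U"
        "leX x w2" "p w2 = Some y2" "y2 \<notin> V" using x unfolding Un_iff unfolding UM_iff by blast
      have xX: "x \<in> X" using x unfolding UM_iff by blast
      have "x \<in> dom p" using DC[OF xX _ w(1)] w(2) by blast
      then obtain y0 where y0: "p x = Some y0" by blast
      have "leY y0 y1" "leY y0 y2" using mono y0 w by auto
      moreover have "y0 \<in> U \<union> V" using x y0 reflX[OF xX] unfolding UM_iff by blast
      moreover have "y0 \<in> Y" "y1 \<in> Y" "y2 \<in> Y" using pd w y0 by auto
      moreover have "\<And>u y. u \<in> U \<Longrightarrow> y \<in> Y \<Longrightarrow> leY u y \<Longrightarrow> y \<in> U" using U unfolding upsets_iff by blast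
      moreover have "\<And>u y. u \<in> V \<Longrightarrow> y \<in> Y \<Longrightarrow> leY u y \<Longrightarrow> y \<in> V" using V unfolding upsets_iff by blast
      ultimately show False using w(3,6) by blast
    qed
  qed
qed

lemma UM_bot:
  assumes c1: "X = downcl X leX {x \<in> X. upcl X leX {x} \<subseteq> dom p}"
  shows "UM {} = {}"
proof -
  have "x \<notin> UM {}" for x
  proof
    assume x: "x \<in> UM {}"
    then have "x \<in> X" unfolding UM_iff by blast
    then obtain z where z: "z \<in> X" "leX x z" "upcl X leX {z} \<subseteq> dom p"
      using c1 unfolding downcl_def by blast
    have "z \<in> upcl X leX {z}" using z reflX unfolding upcl_def by blast
    then obtain y where "p z = Some y" using z by blast
    then show False using x z unfolding UM_iff by blast
  qed
  then show ?thesis by blast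
qed

lemma UM_imp:
  assumes pos: "\<forall>x\<in>dom p. \<forall>y\<in>Y. leY (the (p x)) y \<longrightarrow> (\<exists>z\<in>dom p. leX x z \<and> y = the (p z))"
    and U: "U \<in> upsets Y leY" and V: "V \<in> upsets Y leY"
  shows "UM (up_imp Y leY U V) = up_imp X leX (UM U) (UM V)"
proof
  have Us: "\<And>u y. u \<in> U \<Longrightarrow> y \<in> Y \<Longrightarrow> leY u y \<Longrightarrow> y \<in> U" using U unfolding upsets_iff by blast
  show "UM (up_imp Y leY U V) \<subseteq> up_imp X leX (UM U) (UM V)"
  proof
    fix x assume x: "x \<in> UM (up_imp Y leY U V)"
    have xX: "x \<in> X" using x unfolding UM_iff by blast
    show "x \<in> up_imp X leX (UM U) (UM V)" unfolding up_imp_iff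
    proof (intro conjI notI)
      show "x \<in> X" by fact
      assume "\<exists>u. leX x u \<and> u \<in> UM U \<and> u \<notin> UM V"
      then obtain z where z0: "leX x z" "z \<in> UM U" "z \<notin> UM V" by blast
      then have z: "leX x z" "z \<in> UM U" "z \<notin> UM V" "z \<in> X" unfolding UM_iff by blast+
      then obtain w y where w: "leX z w" "p w = Some y" "y \<notin> V" unfolding UM_iff by blast
      have wX: "w \<in> X" "y \<in> Y" using pd[OF w(2)] by auto
      have "y \<in> U" using z(2) w unfolding UM_iff by blast
      moreover have "leX x w" using transX[OF xX z(4) wX(1) z(1) w(1)] .
      ultimately have "y \<in> up_imp Y leY U V" using x w unfolding UM_iff by blast
      then have "\<not> (\<exists>u. leY y u \<and> u \<in> U \<and> u \<notin> V)" unfolding up_imp_iff by blast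
      then show False using reflY[OF wX(2)] \<open>y \<in> U\<close> w(3) by blast
    qed
  qed
  show "up_imp X leX (UM U) (UM V) \<subseteq> UM (up_imp Y leY U V)"
  proof
    fix x assume x: "x \<in> up_imp X leX (UM U) (UM V)"
    have xX: "x \<in> X" and xn: "\<not> (\<exists>u. leX x u \<and> u \<in> UM U \<and> u \<notin> UM V)" using x unfolding up_imp_iff by blast+
    show "x \<in> UM (up_imp Y leY U V)" unfolding UM_iff
    proof (intro conjI allI impI)
      show "x \<in> X" by fact
      fix w y assume w: "leX x w" "p w = Some y"
      have wX: "w \<in> X" "y \<in> Y" using pd[OF w(2)] by auto
      show "y \<in> up_imp Y leY U V" unfolding up_imp_iff
      proof (intro conjI notI)
        show "y \<in> Y" by fact
        assume "\<exists>u. leY y u \<and> u \<in> U \<and> u \<notin> V"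
        then obtain u where u: "u \<in> Y" "leY y u" "u \<in> U" "u \<notin> V" using U unfolding upsets_iff by blast
        have "w \<in> dom p" using w by blast
        moreover have "leY (the (p w)) u" using w(2) u(2) by simp
        ultimately obtain z where z: "z \<in> dom p" "leX w z" "u = the (p z)" using pos u(1) by blast
        then have pz: "p z = Some u" by auto
        have zX: "z \<in> X" using pd[OF pz] by blast
        have "z \<in> UM U" unfolding UM_iff
        proof (intro conjI allI impI)
          show "z \<in> X" by fact
          fix w' y' assume w': "leX z w'" "p w' = Some y'"
          have "leY u y'" using mono[OF pz w'(2) w'(1)] .
          then show "y' \<in> U" using Us[OF u(3)] pd[OF w'(2)] by blast
        qed
        moreover have "z \<notin> UM V" using pz u(4) reflX[OF zX] unfolding UM_iff by blast
        moreover have "leX x z" using transX[OF xX wX(1) zX w(1) z(2)] .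
        ultimately show False using xn by blast
      qed
    qed
  qed
qed

lemma UM_neg:
  assumes c1: "X = downcl X leX {x \<in> X. upcl X leX {x} \<subseteq> dom p}"
    and c2: "\<forall>x\<in>dom p. \<forall>y\<in>Y. leY (the (p x)) y \<longrightarrow> (\<exists>z\<in>dom p. leX x z \<and> leY y (the (p z)))"
    and U: "U \<in> upsets Y leY"
  shows "UM (up_imp Y leY U {}) = up_imp X leX (UM U) {}"
proof
  have Us: "\<And>u y. u \<in> U \<Longrightarrow> y \<in> Y \<Longrightarrow> leY u y \<Longrightarrow> y \<in> U" and UY: "U \<subseteq> Y" using U unfolding upsets_iff by blast+
  show "UM (up_imp Y leY U {}) \<subseteq> up_imp X leX (UM U) {}"
  proof
    fix x assume x: "x \<in> UM (up_imp Y leY U {})"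
    have xX: "x \<in> X" using x unfolding UM_iff by blast
    show "x \<in> up_imp X leX (UM U) {}" unfolding up_imp_iff
    proof (intro conjI notI)
      show "x \<in> X" by fact
      assume "\<exists>u. leX x u \<and> u \<in> UM U \<and> u \<notin> {}"
      then obtain z where z0: "leX x z" "z \<in> UM U" by blast
      then have z: "z \<in> X" "leX x z" "z \<in> UM U" unfolding UM_iff by blast+
      then obtain z' where z': "z' \<in> X" "leX z z'" "upcl X leX {z'} \<subseteq> dom p"
        using c1 unfolding downcl_def by blast
      have "z' \<in> upcl X leX {z'}" using z' reflX unfolding upcl_def by blast
      then obtain y where y: "p z' = Some y" using z' by blast
      have "y \<in> U" using z(3) z'(2) y unfolding UM_iff by blast
      moreover have "leX x z'" using transX[OF xX z(1) z'(1) z(2) z'(2)] .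
      ultimately have "y \<in> up_imp Y leY U {}" using x y unfolding UM_iff by blast
      then have "\<not> (\<exists>u. leY y u \<and> u \<in> U \<and> u \<notin> {})" unfolding up_imp_iff by blast
      moreover have "y \<in> Y" using pd[OF y] by blast
      ultimately show False using reflY \<open>y \<in> U\<close> by blast
    qed
  qed
  show "up_imp X leX (UM U) {} \<subseteq> UM (up_imp Y leY U {})"
  proof
    fix x assume x: "x \<in> up_imp X leX (UM U) {}"
    have xX: "x \<in> X" and xn: "\<not> (\<exists>u. leX x u \<and> u \<in> UM U \<and> u \<notin> {})" using x unfolding up_imp_iff by blast+
    show "x \<in> UM (up_imp Y leY U {})" unfolding UM_iff
    proof (intro conjI allI impI)
      show "x \<in> X" by fact
      fix w y assume w: "leX x w" "p w = Some y"
      have wX: "w \<in> X" "y \<in> Y" using pd[OF w(2)] by auto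
      show "y \<in> up_imp Y leY U {}" unfolding up_imp_iff
      proof (intro conjI notI)
        show "y \<in> Y" by fact
        assume "\<exists>u. leY y u \<and> u \<in> U \<and> u \<notin> {}"
        then obtain u where u: "u \<in> Y" "leY y u" "u \<in> U" using UY by blast
        have "w \<in> dom p" using w by blast
        moreover have "leY (the (p w)) u" using w(2) u(2) by simp
        ultimately obtain z where z: "z \<in> dom p" "leX w z" "leY u (the (p z))" using c2 u(1) by blast
        then obtain yz where pz: "p z = Some yz" by blast
        have zX: "z \<in> X" "yz \<in> Y" using pd[OF pz] by auto
        have "yz \<in> U" using Us[OF u(3) zX(2)] z(3) pz by simp
        have "z \<in> UM U" unfolding UM_iff
        proof (intro conjI allI impI)
          show "z \<in> X" by (fact zX(1))
          fix w' y' assume w': "leX z w'" "p w' = Some y'"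
          have "leY yz y'" using mono[OF pz w'(2) w'(1)] .
          then show "y' \<in> U" using Us[OF \<open>yz \<in> U\<close>] pd[OF w'(2)] by blast
        qed
        moreover have "leX x z" using transX[OF xX wX(1) zX(1) w(1) z(2)] .
        ultimately show False using xn by blast
      qed
    qed
  qed
qed

lemma UM_inj: assumes r: "ran p = Y" shows "inj_on UM (upsets Y leY)"
proof (rule inj_onI)
  have key: "UM U \<noteq> UM V" if U: "U \<in> upsets Y leY" and y: "y \<in> U" "y \<notin> V" for U V y
  proof -
    have "y \<in> Y" using U y unfolding upsets_iff by blast
    then obtain x where x: "p x = Some y" using r unfolding ran_def by blast
    have xX: "x \<in> X" using pd[OF x] by blast
    have "x \<in> UM U" unfolding UM_iff
    proof (intro conjI allI impI)
      show "x \<in> X" by fact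
      fix w y' assume w: "leX x w" "p w = Some y'"
      have "leY y y'" using mono[OF x w(2) w(1)] .
      then show "y' \<in> U" using U y(1) pd[OF w(2)] unfolding upsets_iff by blast
    qed
    moreover have "x \<notin> UM V" using x y reflX[OF xX] unfolding UM_iff by blast
    ultimately show ?thesis by blast
  qed
  fix U V assume U: "U \<in> upsets Y leY" and V: "V \<in> upsets Y leY" and e: "UM U = UM V"
  show "U = V"
  proof (rule ccontr)
    assume "U \<noteq> V"
    then obtain y where "(y \<in> U \<and> y \<notin> V) \<or> (y \<in> V \<and> y \<notin> U)" by blast
    then show False using key[OF U, of y V] key[OF V, of y U] e by metis
  qed
qed

end


context hs begin
lemma posm: assumes hi: "has_imp K" shows "pos_pmor (dual_set B) (\<subseteq>) (dual_set A) (\<subseteq>) (fstar A B f)"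
  unfolding pos_pmor_def
proof (intro conjI ballI impI)
  show "order_pres (dual_set B) (\<subseteq>) (dual_set A) (\<subseteq>) (fstar A B f)" by (rule fstar_op)
  fix x y assume "x \<in> dom (fstar A B f)" "y \<in> dual_set A" "the (fstar A B f x) \<subseteq> y"
  then show "\<exists>z\<in>dom (fstar A B f). x \<subseteq> z \<and> y = the (fstar A B f z)" by (rule pos[OF hi])
qed

lemma part1: "in_Kdual K (dual_set B) (\<subseteq>) (dual_set A) (\<subseteq>) (fstar A B f)"
proof -
  have N: "neg_pmor (dual_set B) (\<subseteq>) (dual_set A) (\<subseteq>) (fstar A B f)" if "has_bot K" using neg[OF that] .
  have P: "pos_pmor (dual_set B) (\<subseteq>) (dual_set A) (\<subseteq>) (fstar A B f)" if "has_imp K" using posm[OF that] .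
  have T: "total_map (dual_set B) (fstar A B f)" if "has_join K" "has_bot K" using total[OF that] .
  have L: "almost_total (dual_set B) (\<subseteq>) (fstar A B f)" if "has_join K" using almost[OF that] .
  show ?thesis
  proof (cases K)
    case PSL
    have "has_bot K" using PSL unfolding has_bot_def by simp
    then show ?thesis using N PSL unfolding in_Kdual_def by simp
  next
    case ISL
    have "has_imp K" using ISL unfolding has_imp_def by simp
    then show ?thesis using P ISL unfolding in_Kdual_def by simp
  next
    case bISL
    have "has_imp K" "has_bot K" using bISL unfolding has_imp_def has_bot_def by simp_all
    then show ?thesis using N P bISL unfolding in_Kdual_def by simp
  next
    case PDL
    have "has_join K" "has_bot K" using PDL unfolding has_join_def has_bot_def by simp_all
    then show ?thesis using N T PDL unfolding in_Kdual_def by simp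
  next
    case IL
    have "has_join K" "has_imp K" using IL unfolding has_join_def has_imp_def by simp_all
    then show ?thesis using L P IL unfolding in_Kdual_def by simp
  next
    case HA
    have "has_join K" "has_imp K" "has_bot K" using HA unfolding has_join_def has_imp_def has_bot_def by simp_all
    then show ?thesis using N P T HA unfolding in_Kdual_def by simp
  qed
qed
end

lemma neg_op: "neg_pmor X leX Y leY p \<Longrightarrow> order_pres X leX Y leY p"
  unfolding neg_pmor_def by (elim conjE)
lemma pos_op: "pos_pmor X leX Y leY p \<Longrightarrow> order_pres X leX Y leY p"
  unfolding pos_pmor_def by (elim conjE)

lemma kd_props: assumes kd: "in_Kdual K X leX Y leY p"
  shows "order_pres X leX Y leY p"
    "has_bot K \<Longrightarrow> neg_pmor X leX Y leY p"
    "has_imp K \<Longrightarrow> pos_pmor X leX Y leY p"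
    "has_join K \<Longrightarrow> x \<in> X \<Longrightarrow> w \<in> dom p \<Longrightarrow> leX x w \<Longrightarrow> x \<in> dom p"
proof -
  have nb: "neg_pmor X leX Y leY p" if "has_bot K"
  proof (cases K)
    case PSL then show ?thesis using kd by (simp add: in_Kdual_def)
  next
    case ISL then show ?thesis using that by (simp add: has_bot_def)
  next
    case bISL then show ?thesis using kd by (simp add: in_Kdual_def)
  next
    case PDL then show ?thesis using kd by (simp add: in_Kdual_def)
  next
    case IL then show ?thesis using that by (simp add: has_bot_def)
  next
    case HA then show ?thesis using kd by (simp add: in_Kdual_def)
  qed
  have pi: "pos_pmor X leX Y leY p" if "has_imp K"
  proof (cases K)
    case PSL then show ?thesis using that by (simp add: has_imp_def)
  next
    case ISL then show ?thesis using kd by (simp add: in_Kdual_def)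
  next
    case bISL then show ?thesis using kd by (simp add: in_Kdual_def)
  next
    case PDL then show ?thesis using that by (simp add: has_imp_def)
  next
    case IL then show ?thesis using kd by (simp add: in_Kdual_def)
  next
    case HA then show ?thesis using kd by (simp add: in_Kdual_def)
  qed
  have ta: "total_map X p \<or> almost_total X leX p" if "has_join K"
  proof (cases K)
    case PSL then show ?thesis using that by (simp add: has_join_def)
  next
    case ISL then show ?thesis using that by (simp add: has_join_def)
  next
    case bISL then show ?thesis using that by (simp add: has_join_def)
  next
    case PDL then show ?thesis using kd by (simp add: in_Kdual_def)
  next
    case IL then show ?thesis using kd by (simp add: in_Kdual_def)
  next
    case HA then show ?thesis using kd by (simp add: in_Kdual_def)
  qed
  show "order_pres X leX Y leY p"
  proof (cases "has_bot K")
    case True then show ?thesis using nb neg_op by blast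
  next
    case False
    then have "has_imp K" unfolding has_bot_def has_imp_def by (cases K) auto
    then show ?thesis using pi pos_op by blast
  qed
  show "has_bot K \<Longrightarrow> neg_pmor X leX Y leY p" by (rule nb)
  show "has_imp K \<Longrightarrow> pos_pmor X leX Y leY p" by (rule pi)
  show "x \<in> dom p" if "has_join K" "x \<in> X" "w \<in> dom p" "leX x w" for x w
  proof -
    have "total_map X p \<or> almost_total X leX p" using ta that(1) .
    then show ?thesis
    proof
      assume "total_map X p" then show ?thesis using that unfolding total_map_def by blast
    next
      assume "almost_total X leX p"
      moreover have "x \<in> downcl X leX (dom p)" using that unfolding downcl_def by blast
      ultimately show ?thesis unfolding almost_total_def by blast
    qed
  qed
qed

context ps begin
lemma UM_hom:
  assumes nP: "has_bot K \<Longrightarrow> neg_pmor X leX Y leY p"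
    and pP: "has_imp K \<Longrightarrow> pos_pmor X leX Y leY p"
    and DC: "\<And>x w. has_join K \<Longrightarrow> x \<in> X \<Longrightarrow> w \<in> dom p \<Longrightarrow> leX x w \<Longrightarrow> x \<in> dom p"
  shows "hom_K K (Up_alg Y leY) (Up_alg X leX) UM"
  unfolding hom_K_def Up_alg_def alg.simps
proof (intro conjI ballI impI)
  show "UM a \<in> upsets X leX" for a by (rule UM_up)
  show "UM Y = X" by (rule UM_top)
  show "UM (a \<inter> b) = UM a \<inter> UM b" for a b by (rule UM_meet)
  show "UM (a \<union> b) = UM a \<union> UM b" if "has_join K" "a \<in> upsets Y leY" "b \<in> upsets Y leY" for a b
  proof (rule UM_join)
    fix x w assume "x \<in> X" "w \<in> dom p" "leX x w"
    then show "x \<in> dom p" using DC[OF that(1)] by blast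
  qed (use that in auto)
  show "UM (up_imp Y leY a b) = up_imp X leX (UM a) (UM b)" if "has_imp K" "a \<in> upsets Y leY" "b \<in> upsets Y leY" for a b
    using UM_imp[OF _ that(2,3)] pP[OF that(1)] unfolding pos_pmor_def by blast
  show "UM (up_imp Y leY a {}) = up_imp X leX (UM a) {}" if "has_neg K" "a \<in> upsets Y leY" for a
  proof -
    have "has_bot K" using that(1) unfolding has_neg_def has_bot_def by auto
    then have "neg_pmor X leX Y leY p" by (rule nP)
    then show ?thesis using UM_neg[OF _ _ that(2)] unfolding neg_pmor_def by blast
  qed
  show "UM {} = {}" if "has_bot K"
    using UM_bot nP[OF that] unfolding neg_pmor_def by blast
qed
end

theorem proposition3p5:
  fixes K :: variety
    and A :: "'a alg" and B :: "'b alg"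
    and X :: "'x set" and leX :: "'x \<Rightarrow> 'x \<Rightarrow> bool"
    and Y :: "'y set" and leY :: "'y \<Rightarrow> 'y \<Rightarrow> bool"
  assumes "in_K K A" and "in_K K B"
    and "poset X leX" and "poset Y leY"
  shows "(\<forall>f. hom_K K A B f \<longrightarrow>
            in_Kdual K (dual_set B) (\<subseteq>) (dual_set A) (\<subseteq>) (fstar A B f) \<and>
            (inj_on f (acar A) \<longrightarrow> ran (fstar A B f) = dual_set A))
       \<and> (\<forall>p. in_Kdual K X leX Y leY p \<longrightarrow>
            hom_K K (Up_alg Y leY) (Up_alg X leX) (Up_map X leX Y p) \<and>
            (ran p = Y \<longrightarrow> inj_on (Up_map X leX Y p) (acar (Up_alg Y leY))))"
proof (intro conjI allI impI)
  fix f assume hf: "hom_K K A B f"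
  interpret hs K A B f using assms(1,2) hf by unfold_locales
  show "in_Kdual K (dual_set B) (\<subseteq>) (dual_set A) (\<subseteq>) (fstar A B f)" by (rule part1)
  show "ran (fstar A B f) = dual_set A" if "inj_on f (acar A)" using inj_ran[OF that] .
next
  fix p assume kd: "in_Kdual K X leX Y leY p"
  interpret ps X leX Y leY p using assms(3,4) kd_props(1)[OF kd] by unfold_locales
  show "hom_K K (Up_alg Y leY) (Up_alg X leX) (Up_map X leX Y p)"
  proof (rule UM_hom[of K])
    show "neg_pmor X leX Y leY p" if "has_bot K" using kd_props(2)[OF kd that] .
    show "pos_pmor X leX Y leY p" if "has_imp K" using kd_props(3)[OF kd that] .
    show "x \<in> dom p" if "has_join K" "x \<in> X" "w \<in> dom p" "leX x w" for x w
      using kd_props(4)[OF kd that] .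
  qed
  show "inj_on (Up_map X leX Y p) (acar (Up_alg Y leY))" if "ran p = Y"
    using UM_inj[OF that] unfolding Up_alg_def by simp
qed

end
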